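(* Up to scaling, isometries of $\mathbf R^{1,1}$ and translations, there are exactly three space-like curves that translate under the mean curvature flow: \begin{itemize} \item $\cosh x = e^{y-t}$, with curvature $k=\frac{1}{\cos s}$, $-\frac\pi2<s<\frac\pi2$, translating along the $y$-axis; \item $\sinh y = e^{t-x}$, with $k = \frac{1}{\sinh s}$, $s>0$, translating along the $x$-axis; \item $\xi = e^{\eta}+t$, with $k=\frac1s$, $s>0$, translating along the $\xi$-axis. \end{itemize}
   Context: $\mathbf R^{1,1}$ is $\mathbf R^2$ with $\langle (x_1,y_1),(x_2,y_2)\rangle = x_1x_2-y_1y_2$; points $x+hy$, $h^2=1$. Light-like coordinates: $\xi=x+y$, $\eta=x-y$; the $\xi$-axis is the line $y=x$. For a space-like curve ($\langle X_u,X_u\rangle>0$), $s$ is Minkowski arc-length, $T=X_s$, $N=hT$, $T_s=kN$. A family $X(\cdot,t)$ moves by mean curvature flow if $\langle\partial_tX,N\rangle=-k$; a curve translates with velocity $C$ if $X+Ct$ is such a flow, equivalently $-\langle C,N\rangle=k$. *)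

theory Defs
  imports "HOL-Analysis.Analysis"
begin

text \<open>The Minkowski plane R^{1,1} is modelled as real \<times> real, a point (x,y)
  standing for x + h y.\<close>

definition mink :: "real \<times> real \<Rightarrow> real \<times> real \<Rightarrow> real" where
  "mink p q = fst p * fst q - snd p * snd q"

text \<open>Multiplication by h (h^2 = 1): h (x + h y) = y + h x.\<close>
definition hmul :: "real \<times> real \<Rightarrow> real \<times> real" where
  "hmul p = (snd p, fst p)"

definition spacelike_curve :: "real set \<Rightarrow> (real \<Rightarrow> real \<times> real) \<Rightarrow> bool" where
  "spacelike_curve I X \<longleftrightarrow> is_interval I \<and> open I \<and> I \<noteq> {} \<and>
     (\<exists>X' X''. (\<forall>u\<in>I. (X has_vector_derivative X' u) (at u)
                     \<and> (X' has_vector_derivative X'' u) (at u)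
                     \<and> mink (X' u) (X' u) > 0)
              \<and> continuous_on I X'')"

definition speed :: "(real \<Rightarrow> real \<times> real) \<Rightarrow> real \<Rightarrow> real" where
  "speed X u = sqrt (mink (vector_derivative X (at u)) (vector_derivative X (at u)))"

definition utan :: "(real \<Rightarrow> real \<times> real) \<Rightarrow> real \<Rightarrow> real \<times> real" where
  "utan X u = (1 / speed X u) *\<^sub>R vector_derivative X (at u)"

definition unor :: "(real \<Rightarrow> real \<times> real) \<Rightarrow> real \<Rightarrow> real \<times> real" where
  "unor X u = hmul (utan X u)"

text \<open>Curvature k: T_s = k N, i.e. dT/du = (ds/du) k N.\<close>
definition curv :: "(real \<Rightarrow> real \<times> real) \<Rightarrow> real \<Rightarrow> real" where
  "curv X u = (THE k. vector_derivative (utan X) (at u) = (speed X u * k) *\<^sub>R unor X u)"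

text \<open>X translates with velocity C under mean curvature flow: - <C,N> = k.\<close>
definition translates_with :: "real set \<Rightarrow> (real \<Rightarrow> real \<times> real) \<Rightarrow> real \<times> real \<Rightarrow> bool" where
  "translates_with I X C \<longleftrightarrow> (\<forall>u\<in>I. - mink C (unor X u) = curv X u)"

definition translator :: "real set \<Rightarrow> (real \<Rightarrow> real \<times> real) \<Rightarrow> bool" where
  "translator I X \<longleftrightarrow> spacelike_curve I X \<and> (\<exists>C. translates_with I X C)"

definition mink_isometry :: "(real \<times> real \<Rightarrow> real \<times> real) \<Rightarrow> bool" where
  "mink_isometry L \<longleftrightarrow> linear L \<and> (\<forall>p q. mink (L p) (L q) = mink p q)"

definition similarity :: "(real \<times> real \<Rightarrow> real \<times> real) \<Rightarrow> bool" where
  "similarity F \<longleftrightarrow> (\<exists>c L b. c > 0 \<and> mink_isometry L \<and> F = (\<lambda>p. c *\<^sub>R L p + b))"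

text \<open>The three model curves (at time t = 0) and their arc-length parametrisations.\<close>
definition Gamma1 :: "(real \<times> real) set" where
  "Gamma1 = {(x, y). cosh x = exp y}"
definition Gamma2 :: "(real \<times> real) set" where
  "Gamma2 = {(x, y). sinh y = exp (- x)}"
definition Gamma3 :: "(real \<times> real) set" where
  "Gamma3 = {(x, y). x + y = exp (x - y)}"

definition gamma1 :: "real \<Rightarrow> real \<times> real" where
  "gamma1 s = (ln ((1 + sin s) / cos s), - ln (cos s))"
definition gamma2 :: "real \<Rightarrow> real \<times> real" where
  "gamma2 s = (ln (sinh s), arsinh (1 / sinh s))"
definition gamma3 :: "real \<Rightarrow> real \<times> real" where
  "gamma3 s = ((s\<^sup>2 / 4 + 2 * ln (s / 2)) / 2, (s\<^sup>2 / 4 - 2 * ln (s / 2)) / 2)"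

end

theory Submission
  imports Defs
begin


lemma vd_fst: "(g has_vector_derivative g') F \<Longrightarrow> ((\<lambda>x. fst (g x)) has_real_derivative fst g') F"
  using bounded_linear.has_vector_derivative[OF bounded_linear_fst]
  by (simp add: has_real_derivative_iff_has_vector_derivative)

lemma vd_snd: "(g has_vector_derivative g') F \<Longrightarrow> ((\<lambda>x. snd (g x)) has_real_derivative snd g') F"
  using bounded_linear.has_vector_derivative[OF bounded_linear_snd]
  by (simp add: has_real_derivative_iff_has_vector_derivative)

lemma vd_pair: "(f has_real_derivative a) (at x) \<Longrightarrow> (g has_real_derivative b) (at x) \<Longrightarrow>
   ((\<lambda>x. (f x, g x)) has_vector_derivative (a,b)) (at x)"
  by (intro has_vector_derivative_Pair) (simp_all add: has_real_derivative_iff_has_vector_derivative)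

lemma hmul_nz: "mink p p = 1 \<Longrightarrow> hmul p \<noteq> 0"
  by (cases p) (auto simp: mink_def hmul_def zero_prod_def)

lemma model_curve:
  assumes I: "open I"
    and dX: "\<And>u. u\<in>I \<Longrightarrow> (X has_vector_derivative T u) (at u)"
    and dT: "\<And>u. u\<in>I \<Longrightarrow> (T has_vector_derivative k u *\<^sub>R hmul (T u)) (at u)"
    and m: "\<And>u. u\<in>I \<Longrightarrow> mink (T u) (T u) = 1"
    and u: "u \<in> I"
  shows "speed X u = 1 \<and> utan X u = T u \<and> unor X u = hmul (T u) \<and> curv X u = k u"
proof -
  have sp: "speed X v = 1" if "v \<in> I" for v
    using vector_derivative_at[OF dX[OF that]] m[OF that] by (simp add: speed_def)
  have ut: "utan X v = T v" if "v \<in> I" for v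
    using vector_derivative_at[OF dX[OF that]] sp[OF that] by (simp add: utan_def)
  have d: "(utan X has_vector_derivative k u *\<^sub>R hmul (T u)) (at u)"
    by (rule has_vector_derivative_transform_within_open[OF dT[OF u] I u]) (simp add: ut)
  have vd: "vector_derivative (utan X) (at u) = k u *\<^sub>R hmul (T u)"
    by (rule vector_derivative_at[OF d])
  have un: "unor X u = hmul (T u)" by (simp add: unor_def ut[OF u])
  have "curv X u = k u"
    unfolding curv_def vd un sp[OF u]
  proof (rule the_equality)
    fix k' assume "k u *\<^sub>R hmul (T u) = (1 * k') *\<^sub>R hmul (T u)"
    then show "k' = k u" using hmul_nz[OF m[OF u]]
      by (metis mult_1 scaleR_cancel_right)
  qed simp
  then show ?thesis using sp[OF u] ut[OF u] un by simp
qed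

lemma model_spacelike:
  assumes I: "open I" "is_interval I" "I \<noteq> {}"
    and dX: "\<And>u. u\<in>I \<Longrightarrow> (X has_vector_derivative T u) (at u)"
    and dT: "\<And>u. u\<in>I \<Longrightarrow> (T has_vector_derivative k u *\<^sub>R hmul (T u)) (at u)"
    and m: "\<And>u. u\<in>I \<Longrightarrow> mink (T u) (T u) = 1"
    and kc: "continuous_on I k"
  shows "spacelike_curve I X"
proof -
  have Tc: "continuous_on I T"
    by (rule continuous_on_vector_derivative[where f'="\<lambda>u. k u *\<^sub>R hmul (T u)"]) (metis dT has_vector_derivative_at_within)
  have hc: "continuous_on I (\<lambda>u. hmul (T u))"
    unfolding hmul_def using Tc by (auto intro!: continuous_intros)
  have c2: "continuous_on I (\<lambda>u. k u *\<^sub>R hmul (T u))"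
    by (intro continuous_intros kc hc)
  show ?thesis unfolding spacelike_curve_def
    apply (intro conjI I)
    apply (rule exI[of _ T], rule exI[of _ "\<lambda>u. k u *\<^sub>R hmul (T u)"])
    using dX dT m c2 by auto
qed


lemma cos_pos1: "s \<in> {-pi/2<..<pi/2} \<Longrightarrow> cos s > 0"
  by (auto intro!: cos_gt_zero_pi)

lemma sin_gt1: "s \<in> {-pi/2<..<pi/2} \<Longrightarrow> 1 + sin s > 0"
proof -
  assume s: "s \<in> {-pi/2<..<pi/2}"
  have c: "cos s > 0" using cos_pos1[OF s] .
  have "sin s \<ge> -1" by simp
  moreover have "sin s \<noteq> -1"
  proof
    assume "sin s = -1"
    then have "cos s ^ 2 = 0" using sin_cos_squared_add[of s] by simp
    then show False using c by simp
  qed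
  ultimately show ?thesis by linarith
qed

definition T1 :: "real \<Rightarrow> real \<times> real" where "T1 s = (1 / cos s, sin s / cos s)"

lemma gamma1_d: "s \<in> {-pi/2<..<pi/2} \<Longrightarrow> (gamma1 has_vector_derivative T1 s) (at s)"
proof -
  assume s: "s \<in> {-pi/2<..<pi/2}"
  note c = cos_pos1[OF s] and p = sin_gt1[OF s]
  have e: "cos s * cos s + (1 + sin s) * sin s = 1 + sin s"
    using sin_cos_squared_add3[of s] by (simp add: algebra_simps)
  have "((\<lambda>s. ln ((1 + sin s) / cos s)) has_real_derivative 1 / cos s) (at s)"
    using c p e by (auto intro!: derivative_eq_intros simp: field_simps)
       (metis (no_types) c p distrib_left mult.assoc mult_cancel_left1 mult_pos_pos order_less_irrefl mult.commute)
  moreover have "((\<lambda>s. - ln (cos s)) has_real_derivative sin s / cos s) (at s)"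
    using c by (auto intro!: derivative_eq_intros)
  ultimately show ?thesis unfolding gamma1_def[abs_def] T1_def by (rule vd_pair)
qed

lemma T1_d: "s \<in> {-pi/2<..<pi/2} \<Longrightarrow> (T1 has_vector_derivative (1 / cos s) *\<^sub>R hmul (T1 s)) (at s)"
proof -
  assume s: "s \<in> {-pi/2<..<pi/2}"
  note c = cos_pos1[OF s]
  have "((\<lambda>s. 1 / cos s) has_real_derivative sin s / cos s / cos s) (at s)"
    using c by (auto intro!: derivative_eq_intros simp: field_simps power2_eq_square)
  moreover have "((\<lambda>s. sin s / cos s) has_real_derivative 1 / cos s / cos s) (at s)"
    using c sin_cos_squared_add3[of s] by (auto intro!: derivative_eq_intros simp: field_simps power2_eq_square)
  ultimately show ?thesis unfolding T1_def[abs_def] hmul_def by (simp add: vd_pair)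
qed

lemma T1_m: "s \<in> {-pi/2<..<pi/2} \<Longrightarrow> mink (T1 s) (T1 s) = 1"
  using cos_pos1[of s] sin_cos_squared_add3[of s]
  by (simp add: T1_def mink_def field_simps)

lemma gamma1_img: "gamma1 ` {-pi/2<..<pi/2} = Gamma1"
  proof
    show "gamma1 ` {-pi/2<..<pi/2} \<subseteq> Gamma1"
    proof
      fix p assume "p \<in> gamma1 ` {-pi/2<..<pi/2}"
      then obtain s where s: "s \<in> {-pi/2<..<pi/2}" and p: "p = gamma1 s" by auto
      note c = cos_pos1[OF s] and q = sin_gt1[OF s]
      have e: "cos s * cos s + (1 + sin s) * (1 + sin s) = 2 * (1 + sin s)"
        using sin_cos_squared_add3[of s] by (simp add: algebra_simps)
      have "cosh (ln ((1 + sin s) / cos s)) = ((1 + sin s) / cos s + cos s / (1 + sin s)) / 2"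
        using c q by (simp add: cosh_ln_real)
      also have "\<dots> = 1 / cos s"
        using c q e by (simp add: field_simps)
      finally have "cosh (ln ((1 + sin s) / cos s)) = 1 / cos s" .
      then show "p \<in> Gamma1" using c by (simp add: p gamma1_def Gamma1_def exp_minus ln_inverse[symmetric] inverse_eq_divide)
    qed
  next
    show "Gamma1 \<subseteq> gamma1 ` {-pi/2<..<pi/2}"
    proof
      fix p assume "p \<in> Gamma1"
      then obtain x y where p: "p = (x, y)" and e: "cosh x = exp y" by (auto simp: Gamma1_def)
      define s where "s = arctan (sinh x)"
      have sq: "sqrt (1 + (sinh x)\<^sup>2) = cosh x"
        by (rule real_sqrt_unique) (simp_all add: cosh_square_eq)
      have cs: "cos s = 1 / cosh x" unfolding s_def cos_arctan sq ..
      have sn: "sin s = sinh x / cosh x" unfolding s_def sin_arctan sq ..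
      have ch: "cosh x > 0" by simp
      have "(1 + sin s) / cos s = cosh x + sinh x"
        using ch by (simp add: cs sn field_simps)
      also have "\<dots> = exp x" by (rule cosh_plus_sinh)
      finally have "(1 + sin s) / cos s = exp x" .
      moreover have "- ln (cos s) = y" using e by (simp add: cs ln_div)
      ultimately have "gamma1 s = p" by (simp add: gamma1_def p)
      moreover have "s \<in> {-pi/2<..<pi/2}" unfolding s_def using arctan_bounded by auto
      ultimately show "p \<in> gamma1 ` {-pi/2<..<pi/2}" by blast
    qed
  qed

lemma gamma1_all:
  "spacelike_curve {-pi/2<..<pi/2} gamma1 \<and> gamma1 ` {-pi/2<..<pi/2} = Gamma1
      \<and> (\<forall>s\<in>{-pi/2<..<pi/2}. speed gamma1 s = 1 \<and> curv gamma1 s = 1 / cos s)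
      \<and> translates_with {-pi/2<..<pi/2} gamma1 (0, 1)"
proof (intro conjI ballI gamma1_img)
  show "spacelike_curve {-pi/2<..<pi/2} gamma1"
  proof (rule model_spacelike[where T=T1 and k="\<lambda>s. 1 / cos s"])
    have "0 \<in> {-pi/2<..<pi/2::real}" using pi_gt_zero by simp
    then show "{-pi/2<..<pi/2::real} \<noteq> {}" by blast
    have "\<forall>s\<in>{-pi/2<..<pi/2}. cos s \<noteq> 0" using cos_pos1 by force
    then show "continuous_on {-pi/2<..<pi/2} (\<lambda>s. 1 / cos s)"
      by (intro continuous_intros) auto
  qed (auto intro: gamma1_d T1_d T1_m)
  fix s assume s: "s \<in> {-pi/2<..<pi/2}"
  note mc = model_curve[where T=T1 and k="\<lambda>s. 1 / cos s", OF _ gamma1_d T1_d T1_m, OF _ _ _ _ s]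
  show "speed gamma1 s = 1" "curv gamma1 s = 1 / cos s" using mc by auto
next
  show "translates_with {-pi/2<..<pi/2} gamma1 (0, 1)"
    unfolding translates_with_def
  proof
    fix s assume s: "s \<in> {-pi/2<..<pi/2}"
    note mc = model_curve[where T=T1 and k="\<lambda>s. 1 / cos s", OF _ gamma1_d T1_d T1_m, OF _ _ _ _ s]
    then show "- mink (0, 1) (unor gamma1 s) = curv gamma1 s"
      by (simp add: mink_def hmul_def T1_def)
  qed
qed

definition T2 :: "real \<Rightarrow> real \<times> real" where "T2 s = (cosh s / sinh s, - 1 / sinh s)"

lemma sq2: "s > 0 \<Longrightarrow> sqrt ((1 / sinh s)\<^sup>2 + 1) = cosh s / sinh s"
  by (rule real_sqrt_unique) (auto simp: field_simps cosh_square_eq)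

lemma gamma2_d: "s \<in> {0<..} \<Longrightarrow> (gamma2 has_vector_derivative T2 s) (at s)"
proof -
  assume s: "s \<in> {0<..}"
  then have p: "sinh s > 0" by simp
  have "((\<lambda>s. ln (sinh s)) has_real_derivative cosh s / sinh s) (at s)"
    using p by (auto intro!: derivative_eq_intros)
  moreover have "((\<lambda>s. arsinh (1 / sinh s)) has_real_derivative -1 / sinh s) (at s)"
  proof -
    have d1: "((\<lambda>s. 1 / sinh s) has_real_derivative - cosh s / (sinh s)\<^sup>2) (at s)"
      using p by (auto intro!: derivative_eq_intros simp: field_simps power2_eq_square)
    have h: "((\<lambda>s. arsinh (1 / sinh s)) has_real_derivative
        (1 / sqrt ((1 / sinh s)\<^sup>2 + 1)) * (- cosh s / (sinh s)\<^sup>2)) (at s)"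
      by (rule DERIV_chain2[OF arsinh_real_has_field_derivative d1])
    have "(1 / sqrt ((1 / sinh s)\<^sup>2 + 1)) * (- cosh s / (sinh s)\<^sup>2) = -1 / sinh s"
      using p sq2[of s] s cosh_real_pos[of s] by (simp add: field_simps power2_eq_square)
    with h show ?thesis by simp
  qed
  ultimately show ?thesis unfolding gamma2_def[abs_def] T2_def by (rule vd_pair)
qed

lemma T2_d: "s \<in> {0<..} \<Longrightarrow> (T2 has_vector_derivative (1 / sinh s) *\<^sub>R hmul (T2 s)) (at s)"
proof -
  assume s: "s \<in> {0<..}"
  then have p: "sinh s > 0" by simp
  have "((\<lambda>s. cosh s / sinh s) has_real_derivative -1 / sinh s / sinh s) (at s)"
    using p cosh_square_eq[of s] by (auto intro!: derivative_eq_intros simp: field_simps power2_eq_square)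
  moreover have "((\<lambda>s. -1 / sinh s) has_real_derivative cosh s / sinh s / sinh s) (at s)"
    using p by (auto intro!: derivative_eq_intros simp: field_simps power2_eq_square)
  ultimately show ?thesis unfolding T2_def[abs_def] hmul_def by (simp add: vd_pair)
qed

lemma T2_m: "s \<in> {0<..} \<Longrightarrow> mink (T2 s) (T2 s) = 1"
  using cosh_square_eq[of s]
  by (simp add: T2_def mink_def field_simps power2_eq_square)

lemma gamma2_img: "gamma2 ` {0<..} = Gamma2"
proof
  show "gamma2 ` {0<..} \<subseteq> Gamma2"
    by (auto simp: gamma2_def Gamma2_def exp_minus inverse_eq_divide)
next
  show "Gamma2 \<subseteq> gamma2 ` {0<..}"
  proof
    fix p assume "p \<in> Gamma2"
    then obtain x y where p: "p = (x, y)" and e: "sinh y = exp (- x)" by (auto simp: Gamma2_def)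
    define s where "s = arsinh (exp x)"
    have ss: "sinh s = exp x" by (simp add: s_def)
    then have "s > 0" using sinh_real_pos_iff[of s] by simp
    moreover have "gamma2 s = p"
    proof -
      have a: "arsinh (exp (-x)) = y" by (metis e arsinh_sinh_real)
      have "1 / exp x = exp (-x)" by (simp add: exp_minus inverse_eq_divide)
      then show ?thesis by (simp add: gamma2_def ss p a)
    qed
    ultimately show "p \<in> gamma2 ` {0<..}" by force
  qed
qed

lemma gamma2_all:
  "spacelike_curve {0<..} gamma2 \<and> gamma2 ` {0<..} = Gamma2
      \<and> (\<forall>s\<in>{0<..}. speed gamma2 s = 1 \<and> curv gamma2 s = 1 / sinh s)
      \<and> translates_with {0<..} gamma2 (1, 0)"
proof (intro conjI ballI gamma2_img)
  show "spacelike_curve {0<..} gamma2"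
  proof (rule model_spacelike[where T=T2 and k="\<lambda>s. 1 / sinh s"])
    show "({0<..} :: real set) \<noteq> {}" by (auto intro!: exI[of _ 1])
    show "continuous_on {0<..} (\<lambda>s::real. 1 / sinh s)"
      by (auto intro!: continuous_intros)
  qed (auto intro: gamma2_d T2_d T2_m)
  fix s :: real assume s: "s \<in> {0<..}"
  note mc = model_curve[where T=T2 and k="\<lambda>s. 1 / sinh s", OF _ gamma2_d T2_d T2_m, OF _ _ _ _ s]
  show "speed gamma2 s = 1" "curv gamma2 s = 1 / sinh s" using mc by auto
next
  show "translates_with {0<..} gamma2 (1, 0)"
    unfolding translates_with_def
  proof
    fix s :: real assume s: "s \<in> {0<..}"
    note mc = model_curve[where T=T2 and k="\<lambda>s. 1 / sinh s", OF _ gamma2_d T2_d T2_m, OF _ _ _ _ s]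
    then show "- mink (1, 0) (unor gamma2 s) = curv gamma2 s"
      by (simp add: mink_def hmul_def T2_def)
  qed
qed

definition T3 :: "real \<Rightarrow> real \<times> real" where "T3 s = (s / 4 + 1 / s, s / 4 - 1 / s)"

lemma gamma3_d: "s \<in> {0<..} \<Longrightarrow> (gamma3 has_vector_derivative T3 s) (at s)"
proof -
  assume s: "s \<in> {0<..}"
  have "((\<lambda>s. (s\<^sup>2 / 4 + 2 * ln (s / 2)) / 2) has_real_derivative s / 4 + 1 / s) (at s)"
    using s by (auto intro!: derivative_eq_intros simp: field_simps)
  moreover have "((\<lambda>s. (s\<^sup>2 / 4 - 2 * ln (s / 2)) / 2) has_real_derivative s / 4 - 1 / s) (at s)"
    using s by (auto intro!: derivative_eq_intros simp: field_simps)
  ultimately show ?thesis unfolding gamma3_def[abs_def] T3_def by (rule vd_pair)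
qed

lemma T3_d: "s \<in> {0<..} \<Longrightarrow> (T3 has_vector_derivative (1 / s) *\<^sub>R hmul (T3 s)) (at s)"
proof -
  assume s: "s \<in> {0<..}"
  have "((\<lambda>s. s / 4 + 1 / s) has_real_derivative 1 / s * (s / 4 - 1 / s)) (at s)"
    using s by (auto intro!: derivative_eq_intros simp: field_simps power2_eq_square)
  moreover have "((\<lambda>s. s / 4 - 1 / s) has_real_derivative 1 / s * (s / 4 + 1 / s)) (at s)"
    using s by (auto intro!: derivative_eq_intros simp: field_simps power2_eq_square)
  ultimately show ?thesis unfolding T3_def[abs_def] hmul_def by (simp add: vd_pair)
qed

lemma T3_m: "s \<in> {0<..} \<Longrightarrow> mink (T3 s) (T3 s) = 1"
  by (simp add: T3_def mink_def field_simps power2_eq_square)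

lemma gamma3_img: "gamma3 ` {0<..} = Gamma3"
proof
  show "gamma3 ` {0<..} \<subseteq> Gamma3"
  proof
    fix p assume "p \<in> gamma3 ` {0<..}"
    then obtain s :: real where s: "s > 0" and p: "p = gamma3 s" by auto
    have "exp (2 * ln (s / 2)) = (s / 2)\<^sup>2" using s by (simp add: exp_double)
    then show "p \<in> Gamma3" by (simp add: p gamma3_def Gamma3_def field_simps power2_eq_square)
  qed
next
  show "Gamma3 \<subseteq> gamma3 ` {0<..}"
  proof
    fix p assume "p \<in> Gamma3"
    then obtain x y where p: "p = (x, y)" and e: "x + y = exp (x - y)" by (auto simp: Gamma3_def)
    define s where "s = 2 * exp ((x - y) / 2)"
    have s0: "s > 0" by (simp add: s_def)
    have l: "ln (s / 2) = (x - y) / 2" by (simp add: s_def)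
    have q: "s\<^sup>2 / 4 = x + y" unfolding e s_def
      by (simp add: power_mult_distrib exp_double[symmetric])
    have "gamma3 s = p" unfolding gamma3_def l q p by (simp add: field_simps)
    with s0 show "p \<in> gamma3 ` {0<..}" by force
  qed
qed

lemma gamma3_all:
  "spacelike_curve {0<..} gamma3 \<and> gamma3 ` {0<..} = Gamma3
      \<and> (\<forall>s\<in>{0<..}. speed gamma3 s = 1 \<and> curv gamma3 s = 1 / s)
      \<and> translates_with {0<..} gamma3 (1/2, 1/2)"
proof (intro conjI ballI gamma3_img)
  show "spacelike_curve {0<..} gamma3"
  proof (rule model_spacelike[where T=T3 and k="\<lambda>s. 1 / s"])
    show "({0<..} :: real set) \<noteq> {}" by (auto intro!: exI[of _ 1])
    show "continuous_on {0<..} (\<lambda>s::real. 1 / s)"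
      by (intro continuous_intros) auto
  qed (auto intro: gamma3_d T3_d T3_m)
  fix s :: real assume s: "s \<in> {0<..}"
  note mc = model_curve[where T=T3 and k="\<lambda>s. 1 / s", OF _ gamma3_d T3_d T3_m, OF _ _ _ _ s]
  show "speed gamma3 s = 1" "curv gamma3 s = 1 / s" using mc by auto
next
  show "translates_with {0<..} gamma3 (1/2, 1/2)"
    unfolding translates_with_def
  proof
    fix s :: real assume s: "s \<in> {0<..}"
    note mc = model_curve[where T=T3 and k="\<lambda>s. 1 / s", OF _ gamma3_d T3_d T3_m, OF _ _ _ _ s]
    then show "- mink (1/2, 1/2) (unor gamma3 s) = curv gamma3 s"
      by (simp add: mink_def hmul_def T3_def field_simps)
  qed
qed



lemma mink_scale: "mink (c *\<^sub>R p) (d *\<^sub>R q) = c * d * mink p q"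
  by (simp add: mink_def algebra_simps)

lemma orth_decomp:
  assumes "mink T T = 1" "mink T D = 0"
  shows "D = (- mink D (hmul T)) *\<^sub>R hmul T"
proof -
  obtain a b where T: "T = (a, b)" by (cases T)
  obtain d1 d2 where D: "D = (d1, d2)" by (cases D)
  have m: "a * a - b * b = 1" and o: "a * d1 = b * d2" using assms by (simp_all add: T D mink_def)
  have e1: "a * b * d2 = a * a * d1" using o by (metis mult.assoc)
  have e3: "a * b * d1 = b * b * d2" using o by (metis mult.assoc mult.commute)
  have e2: "a * a = 1 + b * b" using m by simp
  have "- (d1 * b - d2 * a) * b = - (b * b * d1) + a * b * d2" by (simp add: algebra_simps)
  also have "\<dots> = - (b * b * d1) + (1 + b * b) * d1" by (simp only: e1 e2)
  also have "\<dots> = d1" by (simp add: algebra_simps)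
  finally have h1: "d1 = - (d1 * b - d2 * a) * b" by simp
  have "- (d1 * b - d2 * a) * a = - (a * b * d1) + a * a * d2" by (simp add: algebra_simps)
  also have "- (a * b * d1) + a * a * d2 = - (b * b * d2) + (1 + b * b) * d2" by (simp only: e3 e2)
  also have "\<dots> = d2" by (simp add: algebra_simps)
  finally have "- (d1 * b - d2 * a) * a = d2" .
  then have "d2 = - (d1 * b - d2 * a) * a" by simp
  with h1 show ?thesis by (simp add: T D mink_def hmul_def)
qed

lemma curv_eq:
  assumes d: "(utan X has_vector_derivative D) (at u)"
    and D: "D = (speed X u * k) *\<^sub>R hmul (utan X u)"
    and h: "hmul (utan X u) \<noteq> 0" and sp: "speed X u \<noteq> 0"
  shows "curv X u = k"
  unfolding curv_def unor_def vector_derivative_at[OF d]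
proof (rule the_equality)
  show "D = (speed X u * k) *\<^sub>R hmul (utan X u)" by (rule D)
  fix k' assume "D = (speed X u * k') *\<^sub>R hmul (utan X u)"
  then have "(speed X u * k') *\<^sub>R hmul (utan X u) = (speed X u * k) *\<^sub>R hmul (utan X u)" using D by metis
  then have "speed X u * k' = speed X u * k" using h by (metis scaleR_cancel_right)
  then show "k' = k" using sp by simp
qed

lemma frame:
  assumes sc: "spacelike_curve I X" and u: "u \<in> I"
  shows "speed X u > 0 \<and> (X has_vector_derivative speed X u *\<^sub>R utan X u) (at u)
     \<and> mink (utan X u) (utan X u) = 1
     \<and> (utan X has_vector_derivative (speed X u * curv X u) *\<^sub>R hmul (utan X u)) (at u)"
proof -
  from sc obtain X' X'' where I: "open I"
    and dX: "\<And>w. w \<in> I \<Longrightarrow> (X has_vector_derivative X' w) (at w)"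
    and dX': "\<And>w. w \<in> I \<Longrightarrow> (X' has_vector_derivative X'' w) (at w)"
    and pos: "\<And>w. w \<in> I \<Longrightarrow> mink (X' w) (X' w) > 0"
    unfolding spacelike_curve_def by blast
  define m where "m w = mink (X' w) (X' w)" for w
  have sp: "speed X w = sqrt (m w)" if "w \<in> I" for w
    using vector_derivative_at[OF dX[OF that]] by (simp add: speed_def m_def)
  have ut: "utan X w = (1 / sqrt (m w)) *\<^sub>R X' w" if "w \<in> I" for w
    using vector_derivative_at[OF dX[OF that]] sp[OF that] by (simp add: utan_def)
  have mu: "m u > 0" using pos[OF u] by (simp add: m_def)
  have dm: "(m has_real_derivative 2 * (fst (X' u) * fst (X'' u) - snd (X' u) * snd (X'' u))) (at u)"
    unfolding m_def[abs_def] mink_def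
    using vd_fst[OF dX'[OF u]] vd_snd[OF dX'[OF u]]
    by (auto intro!: derivative_eq_intros simp: algebra_simps)
  define m' where "m' = 2 * (fst (X' u) * fst (X'' u) - snd (X' u) * snd (X'' u))"
  define E where "E = - (m' / (2 * sqrt (m u))) / (sqrt (m u) * sqrt (m u))"
  have dE: "((\<lambda>w. 1 / sqrt (m w)) has_real_derivative E) (at u)"
    using mu dm unfolding E_def m'_def[symmetric]
    by (auto intro!: derivative_eq_intros simp: field_simps)
  define D where "D = (1 / sqrt (m u)) *\<^sub>R X'' u + E *\<^sub>R X' u"
  have dg: "((\<lambda>w. (1 / sqrt (m w)) *\<^sub>R X' w) has_vector_derivative D) (at u)"
    unfolding D_def using has_vector_derivative_scaleR[OF dE dX'[OF u]] .
  have dT: "(utan X has_vector_derivative D) (at u)"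
    by (rule has_vector_derivative_transform_within_open[OF dg I u]) (simp add: ut)
  have mT: "mink (utan X w) (utan X w) = 1" if "w \<in> I" for w
  proof -
    have "m w > 0" using pos[OF that] by (simp add: m_def)
    then show ?thesis unfolding ut[OF that] mink_scale m_def[symmetric]
      by (simp add: field_simps)
  qed
  define T where "T = utan X"
  have dfT: "((\<lambda>w. fst (T w)) has_real_derivative fst D) (at u)"
    "((\<lambda>w. snd (T w)) has_real_derivative snd D) (at u)"
    using vd_fst[OF dT] vd_snd[OF dT] by (simp_all add: T_def)
  have d1: "((\<lambda>w. mink (T w) (T w)) has_real_derivative 2 * mink (T u) D) (at u)"
    unfolding mink_def using dfT by (auto intro!: derivative_eq_intros simp: algebra_simps)
  have d0: "((\<lambda>w. mink (T w) (T w)) has_real_derivative 0) (at u)"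
  proof (rule has_field_derivative_transform_within_open[OF _ I u])
    show "((\<lambda>w. 1) has_real_derivative 0) (at u)" by simp
    show "\<And>w. w \<in> I \<Longrightarrow> 1 = mink (T w) (T w)" using mT by (simp add: T_def)
  qed
  have o: "mink (T u) D = 0" using DERIV_unique[OF d1 d0] by simp
  have Dd: "D = (- mink D (hmul (T u))) *\<^sub>R hmul (T u)"
    by (rule orth_decomp[OF mT[OF u, folded T_def] o])
  have v0: "speed X u > 0" using sp[OF u] mu by simp
  have cv: "curv X u = (- mink D (hmul (T u))) / speed X u"
    by (rule curv_eq[OF dT]) (use v0 Dd hmul_nz[OF mT[OF u]] in \<open>simp_all add: T_def\<close>)
  have "(speed X u * curv X u) = - mink D (hmul (T u))" using v0 cv by simp
  then have dT2: "(utan X has_vector_derivative (speed X u * curv X u) *\<^sub>R hmul (utan X u)) (at u)"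
    using dT Dd by (simp add: T_def)
  have "(X has_vector_derivative speed X u *\<^sub>R utan X u) (at u)"
    using dX[OF u] ut[OF u] sp[OF u] mu by simp
  then show ?thesis using v0 mT[OF u] dT2 by simp
qed


lemma const_on:
  assumes "is_interval I" "\<And>u. u \<in> I \<Longrightarrow> (f has_real_derivative 0) (at u)"
  shows "\<exists>c. \<forall>u\<in>I. f u = c"
  using has_field_derivative_zero_constant[of I f] assms is_interval_convex
  by (meson has_field_derivative_at_within)

definition NF :: "real set \<Rightarrow> (real \<Rightarrow> real \<times> real) \<Rightarrow> (real \<Rightarrow> real) \<Rightarrow> (real \<Rightarrow> real \<times> real) \<Rightarrow> real \<times> real \<Rightarrow> bool" where
  "NF I Y w S C \<longleftrightarrow> is_interval I \<and> (\<forall>u\<in>I. (Y has_vector_derivative w u *\<^sub>R S u) (at u)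
     \<and> (S has_vector_derivative (- w u * mink C (hmul (S u))) *\<^sub>R hmul (S u)) (at u)
     \<and> mink (S u) (S u) = 1)"

definition reach :: "real set \<Rightarrow> (real \<Rightarrow> real \<times> real) \<Rightarrow> (real \<times> real) set \<Rightarrow> bool" where
  "reach I Y G \<longleftrightarrow> (\<exists>\<sigma>1 \<sigma>2 b1 b2. (\<sigma>1 = 1 \<or> \<sigma>1 = -1) \<and> (\<sigma>2 = 1 \<or> \<sigma>2 = -1) \<and>
      (\<forall>u\<in>I. (\<sigma>1 * fst (Y u) + b1, \<sigma>2 * snd (Y u) + b2) \<in> G))"

lemma NF_comp:
  assumes "NF I Y w S C" "u \<in> I"
  shows "((\<lambda>u. fst (Y u)) has_real_derivative w u * fst (S u)) (at u)"
    "((\<lambda>u. snd (Y u)) has_real_derivative w u * snd (S u)) (at u)"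
    "((\<lambda>u. fst (S u)) has_real_derivative (- w u * mink C (hmul (S u))) * snd (S u)) (at u)"
    "((\<lambda>u. snd (S u)) has_real_derivative (- w u * mink C (hmul (S u))) * fst (S u)) (at u)"
    "fst (S u) ^ 2 = 1 + snd (S u) ^ 2"
proof -
  have h: "(Y has_vector_derivative w u *\<^sub>R S u) (at u)"
     "(S has_vector_derivative (- w u * mink C (hmul (S u))) *\<^sub>R hmul (S u)) (at u)"
     "mink (S u) (S u) = 1" using assms unfolding NF_def by blast+
  show "((\<lambda>u. fst (Y u)) has_real_derivative w u * fst (S u)) (at u)"
    using vd_fst[OF h(1)] by simp
  show "((\<lambda>u. snd (Y u)) has_real_derivative w u * snd (S u)) (at u)"
    using vd_snd[OF h(1)] by simp
  show "((\<lambda>u. fst (S u)) has_real_derivative (- w u * mink C (hmul (S u))) * snd (S u)) (at u)"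
    using vd_fst[OF h(2)] by (simp add: hmul_def)
  show "((\<lambda>u. snd (S u)) has_real_derivative (- w u * mink C (hmul (S u))) * fst (S u)) (at u)"
    using vd_snd[OF h(2)] by (simp add: hmul_def)
  show "fst (S u) ^ 2 = 1 + snd (S u) ^ 2" using h(3) by (simp add: mink_def power2_eq_square)
qed

lemma cosh_arsinh: "(z::real) > 0 \<Longrightarrow> z ^ 2 = 1 + t ^ 2 \<Longrightarrow> cosh (arsinh t) = z"
proof -
  assume z: "z > 0" "z ^ 2 = 1 + t ^ 2"
  have "cosh (arsinh t) ^ 2 = z ^ 2" using z cosh_square_eq[of "arsinh t"] by simp
  then show ?thesis using z(1) cosh_real_pos[of "arsinh t"]
    by (metis power2_eq_iff_nonneg less_imp_le)
qed

lemma sqrt_S: "(z::real) > 0 \<Longrightarrow> z ^ 2 = 1 + t ^ 2 \<Longrightarrow> sqrt (t ^ 2 + 1) = z"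
  by (rule real_sqrt_unique) auto

lemma nf_time:
  assumes nf: "NF I Y w S (0, 1)" and pos: "\<And>u. u \<in> I \<Longrightarrow> fst (S u) > 0"
  shows "reach I Y Gamma1"
proof -
  have I: "is_interval I" using nf by (simp add: NF_def)
  have "\<exists>a. \<forall>u\<in>I. fst (Y u) - arsinh (snd (S u)) = a"
  proof (rule const_on[OF I])
    fix u assume u: "u \<in> I"
    note c = NF_comp[OF nf u]
    have sq: "sqrt (snd (S u) ^ 2 + 1) = fst (S u)" using sqrt_S[OF pos[OF u] c(5)] .
    have "((\<lambda>u. arsinh (snd (S u))) has_real_derivative
             (1 / sqrt (snd (S u) ^ 2 + 1)) * ((- w u * mink (0, 1) (hmul (S u))) * fst (S u))) (at u)"
      by (rule DERIV_chain2[OF arsinh_real_has_field_derivative c(4)])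
    then have "((\<lambda>u. arsinh (snd (S u))) has_real_derivative w u * fst (S u)) (at u)"
      using pos[OF u] by (simp add: sq mink_def hmul_def)
    then show "((\<lambda>u. fst (Y u) - arsinh (snd (S u))) has_real_derivative 0) (at u)"
      using c(1) by (auto intro!: derivative_eq_intros)
  qed
  then obtain a where a: "\<And>u. u \<in> I \<Longrightarrow> fst (Y u) - arsinh (snd (S u)) = a" by blast
  have "\<exists>d. \<forall>u\<in>I. snd (Y u) - ln (fst (S u)) = d"
  proof (rule const_on[OF I])
    fix u assume u: "u \<in> I"
    note c = NF_comp[OF nf u]
    show "((\<lambda>u. snd (Y u) - ln (fst (S u))) has_real_derivative 0) (at u)"
      using c(2) c(3) pos[OF u]
      by (auto intro!: derivative_eq_intros simp: mink_def hmul_def)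
  qed
  then obtain d where d: "\<And>u. u \<in> I \<Longrightarrow> snd (Y u) - ln (fst (S u)) = d" by blast
  show ?thesis unfolding reach_def
  proof (intro exI conjI ballI)
    fix u assume u: "u \<in> I"
    note c = NF_comp[OF nf u]
    have "fst (Y u) - a = arsinh (snd (S u))" using a[OF u] by simp
    moreover have "snd (Y u) - d = ln (fst (S u))" using d[OF u] by simp
    ultimately show "(1 * fst (Y u) + - a, 1 * snd (Y u) + - d) \<in> Gamma1"
      using cosh_arsinh[OF pos[OF u] c(5)] pos[OF u] by (simp add: Gamma1_def)
  qed simp_all
qed


lemma nf_space:
  assumes nf: "NF I Y w S (1, 0)" and pos: "\<And>u. u \<in> I \<Longrightarrow> fst (S u) > 0"
    and nz: "u0 \<in> I" "mink (1, 0) (hmul (S u0)) \<noteq> 0"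
  shows "reach I Y Gamma2"
proof -
  have I: "is_interval I" using nf by (simp add: NF_def)
  have "\<exists>K. \<forall>u\<in>I. snd (S u) * exp (fst (Y u)) = K"
  proof (rule const_on[OF I])
    fix u assume u: "u \<in> I"
    note c = NF_comp[OF nf u]
    show "((\<lambda>u. snd (S u) * exp (fst (Y u))) has_real_derivative 0) (at u)"
      using c(1) c(4) by (auto intro!: derivative_eq_intros simp: mink_def hmul_def algebra_simps)
  qed
  then obtain K where K: "\<And>u. u \<in> I \<Longrightarrow> snd (S u) * exp (fst (Y u)) = K" by blast
  have "\<exists>D. \<forall>u\<in>I. snd (Y u) + arsinh (snd (S u)) = D"
  proof (rule const_on[OF I])
    fix u assume u: "u \<in> I"
    note c = NF_comp[OF nf u]
    have sq: "sqrt (snd (S u) ^ 2 + 1) = fst (S u)" using sqrt_S[OF pos[OF u] c(5)] .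
    have "((\<lambda>u. arsinh (snd (S u))) has_real_derivative
             (1 / sqrt (snd (S u) ^ 2 + 1)) * ((- w u * mink (1, 0) (hmul (S u))) * fst (S u))) (at u)"
      by (rule DERIV_chain2[OF arsinh_real_has_field_derivative c(4)])
    then have "((\<lambda>u. arsinh (snd (S u))) has_real_derivative - w u * snd (S u)) (at u)"
      using pos[OF u] by (simp add: sq mink_def hmul_def)
    then show "((\<lambda>u. snd (Y u) + arsinh (snd (S u))) has_real_derivative 0) (at u)"
      using c(2) by (auto intro!: derivative_eq_intros)
  qed
  then obtain D where D: "\<And>u. u \<in> I \<Longrightarrow> snd (Y u) + arsinh (snd (S u)) = D" by blast
  have K0: "K \<noteq> 0" using K[OF nz(1)] nz(2) by (simp add: mink_def hmul_def) (metis exp_not_eq_zero mult_eq_0_iff)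
  define \<kappa> where "\<kappa> = sgn K"
  define m where "m = ln \<bar>K\<bar>"
  have kK: "\<kappa> * K = \<bar>K\<bar>" by (simp add: \<kappa>_def abs_sgn)
  have k1: "\<kappa> = 1 \<or> \<kappa> = -1" using K0 by (auto simp: \<kappa>_def sgn_if)
  show ?thesis unfolding reach_def
  proof (intro exI conjI ballI)
    fix u assume u: "u \<in> I"
    have s2: "snd (S u) = K * exp (- fst (Y u))" using K[OF u] by (simp add: exp_minus field_simps)
    have "sinh (D - snd (Y u)) = snd (S u)" using D[OF u] by (metis add_diff_cancel_left' sinh_arsinh_real)
    then have "sinh (\<kappa> * (D - snd (Y u))) = \<bar>K\<bar> * exp (- fst (Y u))"
    proof -
      from k1 show ?thesis
      proof
        assume k: "\<kappa> = 1"
        then have "\<bar>K\<bar> = K" using kK by (metis mult_1)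
        then show ?thesis using k s2 \<open>sinh (D - snd (Y u)) = snd (S u)\<close> by simp
      next
        assume k: "\<kappa> = -1"
        then have "\<bar>K\<bar> = - K" using kK by (metis mult_minus1)
        then show ?thesis using k s2 \<open>sinh (D - snd (Y u)) = snd (S u)\<close> by (simp only: mult_minus_left mult_1 sinh_minus)
      qed
    qed
    also have "\<dots> = exp (- (1 * fst (Y u) + - m))"
    proof -
      have em: "exp m = \<bar>K\<bar>" using K0 by (simp add: m_def)
      have "exp (- (1 * fst (Y u) + - m)) = exp (m + - fst (Y u))" by (rule arg_cong[where f=exp]) simp
      also have "\<dots> = exp m * exp (- fst (Y u))" by (rule exp_add)
      finally show ?thesis by (simp only: em)
    qed
    finally show "(1 * fst (Y u) + - m, (- \<kappa>) * snd (Y u) + \<kappa> * D) \<in> Gamma2"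
      by (simp add: Gamma2_def algebra_simps)
  qed (use k1 in auto)
qed


lemma alg1:
  fixes a w s1 s2 :: real
  assumes "2 * a = w * (s1 - s2)" "(s1 - s2) * (s1 + s2) = 1"
  shows "(w * s1 + w * s2) - ((a * s2 + a * s1) * (s1 + s2) + (a * s2 + a * s1) * (s1 + s2)) = 0"
proof -
  have "(w * s1 + w * s2) - ((a * s2 + a * s1) * (s1 + s2) + (a * s2 + a * s1) * (s1 + s2)) = w * (s1 + s2) - (2 * a) * (s1 + s2) * (s1 + s2)"
    by (simp add: algebra_simps)
  also have "\<dots> = w * (s1 + s2) - (w * (s1 - s2)) * (s1 + s2) * (s1 + s2)" by (simp only: assms)
  also have "\<dots> = w * (s1 + s2) * (1 - (s1 - s2) * (s1 + s2))" by (simp add: algebra_simps)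
  also have "\<dots> = 0" by (simp only: assms) simp
  finally show ?thesis .
qed

lemma alg2:
  fixes a w s1 s2 :: real
  assumes "2 * a = w * (s1 - s2)" "s1 + s2 > 0"
  shows "inverse (s1 + s2) * (a * s2 + a * s1) - (w * s1 - w * s2) / 2 = 0"
proof -
  have "a * s2 + a * s1 = a * (s1 + s2)" by (simp add: algebra_simps)
  then have "inverse (s1 + s2) * (a * s2 + a * s1) = a" using assms(2) by simp
  moreover have "(w * s1 - w * s2) / 2 = a" using assms(1) by (simp add: algebra_simps)
  ultimately show ?thesis by simp
qed

lemma nf_light:
  assumes nf: "NF I Y w S (1/2, 1/2)" and pos: "\<And>u. u \<in> I \<Longrightarrow> fst (S u) > 0"
  shows "reach I Y Gamma3"
proof -
  have I: "is_interval I" using nf by (simp add: NF_def)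
  have e: "(fst (S u) - snd (S u)) * (fst (S u) + snd (S u)) = 1" if u: "u \<in> I" for u
    using NF_comp(5)[OF nf u] by (simp add: algebra_simps power2_eq_square)
  have Ep: "fst (S u) + snd (S u) > 0" if u: "u \<in> I" for u
  proof (rule ccontr)
    assume "\<not> fst (S u) + snd (S u) > 0"
    then have a: "fst (S u) + snd (S u) \<le> 0" by simp
    then have "fst (S u) - snd (S u) > 0" using pos[OF u] by linarith
    then have "(fst (S u) - snd (S u)) * (fst (S u) + snd (S u)) \<le> 0" using a by (simp add: mult_nonneg_nonpos)
    then show False using e[OF u] by simp
  qed
  have mu: "- w u * mink (1/2, 1/2) (hmul (S u)) = w u * (fst (S u) - snd (S u)) / 2" for u
    by (simp add: mink_def hmul_def field_simps)
  have "\<exists>Q. \<forall>u\<in>I. (fst (Y u) + snd (Y u)) - (fst (S u) + snd (S u)) * (fst (S u) + snd (S u)) = Q"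
  proof (rule const_on[OF I])
    fix u assume u: "u \<in> I"
    note c = NF_comp[OF nf u, unfolded mu]
    note dE = DERIV_add[OF c(3) c(4)]
    note h = DERIV_diff[OF DERIV_add[OF c(1) c(2)] DERIV_mult[OF dE dE]]
    have "(w u * fst (S u) + w u * snd (S u)) -
      ((w u * (fst (S u) - snd (S u)) / 2 * snd (S u) + w u * (fst (S u) - snd (S u)) / 2 * fst (S u)) * (fst (S u) + snd (S u))
     + (w u * (fst (S u) - snd (S u)) / 2 * snd (S u) + w u * (fst (S u) - snd (S u)) / 2 * fst (S u)) * (fst (S u) + snd (S u))) = 0"
      by (rule alg1) (use e[OF u] in simp_all)
    note z = this
    show "((\<lambda>u. (fst (Y u) + snd (Y u)) - (fst (S u) + snd (S u)) * (fst (S u) + snd (S u))) has_real_derivative 0) (at u)"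
      using DERIV_cong[OF h z] by simp
  qed
  then obtain Q1 where Q1: "\<And>u. u \<in> I \<Longrightarrow> (fst (Y u) + snd (Y u)) - (fst (S u) + snd (S u)) * (fst (S u) + snd (S u)) = Q1" by blast
  have "\<exists>Q. \<forall>u\<in>I. ln (fst (S u) + snd (S u)) - (fst (Y u) - snd (Y u)) / 2 = Q"
  proof (rule const_on[OF I])
    fix u assume u: "u \<in> I"
    note c = NF_comp[OF nf u, unfolded mu]
    note dE = DERIV_add[OF c(3) c(4)]
    note h = DERIV_diff[OF DERIV_chain2[OF DERIV_ln[OF Ep[OF u]] dE] DERIV_cdivide[OF DERIV_diff[OF c(1) c(2)], of 2]]
    have "inverse (fst (S u) + snd (S u)) * (w u * (fst (S u) - snd (S u)) / 2 * snd (S u) + w u * (fst (S u) - snd (S u)) / 2 * fst (S u))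
       - (w u * fst (S u) - w u * snd (S u)) / 2 = 0"
      by (rule alg2) (use Ep[OF u] in simp_all)
    note z = this
    show "((\<lambda>u. ln (fst (S u) + snd (S u)) - (fst (Y u) - snd (Y u)) / 2) has_real_derivative 0) (at u)"
      using DERIV_cong[OF h z] by simp
  qed
  then obtain Q2 where Q2: "\<And>u. u \<in> I \<Longrightarrow> ln (fst (S u) + snd (S u)) - (fst (Y u) - snd (Y u)) / 2 = Q2" by blast
  show ?thesis unfolding reach_def
  proof (intro exI conjI ballI)
    fix u assume u: "u \<in> I"
    define E where "E = fst (S u) + snd (S u)"
    have E0: "E > 0" using Ep[OF u] by (simp add: E_def)
    have a: "fst (Y u) + snd (Y u) - Q1 = E * E" using Q1[OF u] by (simp add: E_def)
    have b: "fst (Y u) - snd (Y u) + 2 * Q2 = 2 * ln E" unfolding E_def Q2[OF u, symmetric] by (simp add: field_simps)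
    have ex: "exp (2 * ln E) = E * E" using E0 by (simp add: exp_double power2_eq_square)
    have "(1 * fst (Y u) + - ((Q1 - 2 * Q2) / 2)) + (1 * snd (Y u) + - ((Q1 + 2 * Q2) / 2))
        = fst (Y u) + snd (Y u) - Q1" by (simp add: field_simps)
    moreover have "(1 * fst (Y u) + - ((Q1 - 2 * Q2) / 2)) - (1 * snd (Y u) + - ((Q1 + 2 * Q2) / 2))
        = fst (Y u) - snd (Y u) + 2 * Q2" by (simp add: field_simps)
    ultimately show "(1 * fst (Y u) + - ((Q1 - 2 * Q2) / 2), 1 * snd (Y u) + - ((Q1 + 2 * Q2) / 2)) \<in> Gamma3"
      using a b ex by (simp add: Gamma3_def)
  qed simp_all
qed



lemma mink_scaleL: "mink (a *\<^sub>R p) q = a * mink p q"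
  by (simp add: mink_def algebra_simps)
lemma mink_scaleR': "mink p (a *\<^sub>R q) = a * mink p q"
  by (simp add: mink_def algebra_simps)
lemma hmul_scale: "hmul (a *\<^sub>R p) = a *\<^sub>R hmul p"
  by (simp add: hmul_def)

definition lm :: "real \<Rightarrow> real \<Rightarrow> real \<Rightarrow> real \<Rightarrow> real \<times> real \<Rightarrow> real \<times> real" where
  "lm a b c d p = (a * fst p + b * snd p, c * fst p + d * snd p)"

lemma lm_linear: "linear (lm a b c d)"
  by (rule linearI) (auto simp: lm_def algebra_simps)

lemma lm_iso:
  assumes "a * a - c * c = 1" "b * b - d * d = -1" "a * b - c * d = 0"
  shows "mink_isometry (lm a b c d)"
  unfolding mink_isometry_def
proof (intro conjI lm_linear allI)
  fix p q :: "real \<times> real"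
  obtain x y where p: "p = (x, y)" by (cases p)
  obtain x' y' where q: "q = (x', y')" by (cases q)
  have "mink (lm a b c d p) (lm a b c d q)
     = (a * a - c * c) * (x * x') + (a * b - c * d) * (x * y' + y * x') + (b * b - d * d) * (y * y')"
    by (simp add: p q lm_def mink_def algebra_simps)
  also have "\<dots> = x * x' - y * y'" by (simp only: assms) simp?
  finally show "mink (lm a b c d p) (lm a b c d q) = mink p q" by (simp add: p q mink_def)
qed

lemma lm_h1: "b = c \<Longrightarrow> d = a \<Longrightarrow> hmul (lm a b c d p) = 1 *\<^sub>R lm a b c d (hmul p)"
  by (simp add: lm_def hmul_def algebra_simps)

lemma lm_h2: "c = - b \<Longrightarrow> d = - a \<Longrightarrow> hmul (lm a b c d p) = (-1) *\<^sub>R lm a b c d (hmul p)"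
  by (simp add: lm_def hmul_def algebra_simps)

lemma no_sign_change:
  fixes f :: "real \<Rightarrow> real"
  assumes I: "is_interval I" and c: "continuous_on I f" and nz: "\<And>u. u \<in> I \<Longrightarrow> f u \<noteq> 0"
    and a: "a \<in> I" and b: "b \<in> I" and pa: "f a > 0"
  shows "f b > 0"
proof (rule ccontr)
  assume "\<not> f b > 0"
  then have n: "f b \<le> 0" by linarith
  show False
  proof (cases "a \<le> b")
    case True
    have sub: "{a..b} \<subseteq> I"
    proof
      fix x assume "x \<in> {a..b}"
      then show "x \<in> I" using I a b unfolding is_interval_1 by (meson atLeastAtMost_iff)
    qed
    have cc: "continuous_on {a..b} f" using c sub continuous_on_subset by blast
    have "\<exists>x. a \<le> x \<and> x \<le> b \<and> f x = 0"
      by (rule IVT2'[OF n _ True cc]) (use pa in simp)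
    then obtain x where x: "a \<le> x" "x \<le> b" "f x = 0" by blast
    then have "x \<in> I" using sub by auto
    then show False using nz x(3) by blast
  next
    case False
    then have ba: "b \<le> a" by simp
    have sub: "{b..a} \<subseteq> I"
    proof
      fix x assume "x \<in> {b..a}"
      then show "x \<in> I" using I a b unfolding is_interval_1 by (meson atLeastAtMost_iff)
    qed
    have cc: "continuous_on {b..a} f" using c sub continuous_on_subset by blast
    have "\<exists>x. b \<le> x \<and> x \<le> a \<and> f x = 0"
      by (rule IVT'[OF n _ ba cc]) (use pa in simp)
    then obtain x where x: "b \<le> x" "x \<le> a" "f x = 0" by blast
    then have "x \<in> I" using sub by auto
    then show False using nz x(3) by blast
  qed
qed

lemma sign_choice:
  fixes f :: "real \<Rightarrow> real"
  assumes I: "is_interval I" and c: "continuous_on I f" and nz: "\<And>u. u \<in> I \<Longrightarrow> f u \<noteq> 0"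
  shows "\<exists>\<epsilon>. (\<epsilon> = 1 \<or> \<epsilon> = -1) \<and> (\<forall>u\<in>I. \<epsilon> * f u > 0)"
proof (cases "I = {}")
  case True then show ?thesis by auto
next
  case False
  then obtain u0 where u0: "u0 \<in> I" by blast
  show ?thesis
  proof (cases "f u0 > 0")
    case True
    then have "\<forall>u\<in>I. 1 * f u > 0" using no_sign_change[OF I c nz u0] by simp
    then show ?thesis by blast
  next
    case False
    then have "- f u0 > 0" using nz[OF u0] by linarith
    moreover have "continuous_on I (\<lambda>u. - f u)" using c by (intro continuous_intros)
    ultimately have "\<forall>u\<in>I. - f u > 0" using no_sign_change[OF I _ _ u0, of "\<lambda>u. - f u"] nz by simp
    then have "\<forall>u\<in>I. (-1) * f u > 0" by simp
    then show ?thesis by blast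
  qed
qed



lemma transfer:
  assumes nf: "NF I X v T C"
    and L: "mink_isometry L" and hL: "\<And>p. hmul (L p) = \<delta> *\<^sub>R L (hmul p)" and dl: "\<delta> = 1 \<or> \<delta> = -1"
    and c: "c > 0" and C': "(1/c) *\<^sub>R L C = C'"
  shows "\<exists>w' S'. NF I (\<lambda>u. c *\<^sub>R L (X u)) w' S' C' \<and> (\<forall>u\<in>I. fst (S' u) > 0)
     \<and> (\<forall>u\<in>I. mink C' (hmul (S' u)) = 0 \<longleftrightarrow> mink C (hmul (T u)) = 0)"
proof -
  have I: "is_interval I" using nf by (simp add: NF_def)
  have lin: "linear L" and mL: "\<And>p q. mink (L p) (L q) = mink p q" using L by (auto simp: mink_isometry_def)
  have bl: "bounded_linear L" using lin by (simp add: linear_conv_bounded_linear)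
  have dX: "(X has_vector_derivative v u *\<^sub>R T u) (at u)"
    and dT: "(T has_vector_derivative (- v u * mink C (hmul (T u))) *\<^sub>R hmul (T u)) (at u)"
    and mT: "mink (T u) (T u) = 1" if "u \<in> I" for u
    using nf that by (auto simp: NF_def)
  have Tc: "continuous_on I T"
    by (rule continuous_on_vector_derivative[where f'="\<lambda>u. (- v u * mink C (hmul (T u))) *\<^sub>R hmul (T u)"])
       (metis dT has_vector_derivative_at_within)
  have Lc: "continuous_on UNIV L" using linear_continuous_on[OF bl] .
  have fc: "continuous_on I (\<lambda>u. fst (L (T u)))"
    using continuous_on_compose2[OF Lc Tc] by (intro continuous_intros) auto
  have fnz: "fst (L (T u)) \<noteq> 0" if u: "u \<in> I" for u
  proof
    assume "fst (L (T u)) = 0"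
    then have "mink (L (T u)) (L (T u)) = - (snd (L (T u)))\<^sup>2" by (simp add: mink_def power2_eq_square)
    then have "1 = - (snd (L (T u)))\<^sup>2" using mL[of "T u" "T u"] mT[OF u] by simp
    moreover have "(snd (L (T u)))\<^sup>2 \<ge> 0" by simp
    ultimately show False by linarith
  qed
  obtain \<epsilon> where e: "\<epsilon> = 1 \<or> \<epsilon> = -1" and ep: "\<And>u. u \<in> I \<Longrightarrow> \<epsilon> * fst (L (T u)) > 0"
    using sign_choice[OF I fc fnz] by blast
  have hS: "hmul (\<epsilon> *\<^sub>R L (T u)) = (\<epsilon> * \<delta>) *\<^sub>R L (hmul (T u))" for u
    by (simp add: hmul_scale hL)
  have mC: "mink C' (hmul (\<epsilon> *\<^sub>R L (T u))) = (\<epsilon> * \<delta> / c) * mink C (hmul (T u))" for u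
    unfolding hS C'[symmetric] mink_scaleL mink_scaleR' mL by simp
  show ?thesis
  proof (intro exI conjI ballI)
    show "NF I (\<lambda>u. c *\<^sub>R L (X u)) (\<lambda>u. c * \<epsilon> * v u) (\<lambda>u. \<epsilon> *\<^sub>R L (T u)) C'"
      unfolding NF_def
    proof (intro conjI I ballI)
      fix u assume u: "u \<in> I"
      have "((\<lambda>u. c *\<^sub>R L (X u)) has_vector_derivative c *\<^sub>R L (v u *\<^sub>R T u)) (at u)"
        by (rule bounded_linear.has_vector_derivative[OF bounded_linear_scaleR_right]
                 bounded_linear.has_vector_derivative[OF bl dX[OF u]])+
      moreover have "c *\<^sub>R L (v u *\<^sub>R T u) = (c * \<epsilon> * v u) *\<^sub>R (\<epsilon> *\<^sub>R L (T u))"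
        using e by (auto simp: linear_scale[OF lin])
      ultimately show "((\<lambda>u. c *\<^sub>R L (X u)) has_vector_derivative (c * \<epsilon> * v u) *\<^sub>R (\<epsilon> *\<^sub>R L (T u))) (at u)"
        by simp
      have "((\<lambda>u. \<epsilon> *\<^sub>R L (T u)) has_vector_derivative \<epsilon> *\<^sub>R L ((- v u * mink C (hmul (T u))) *\<^sub>R hmul (T u))) (at u)"
        by (rule bounded_linear.has_vector_derivative[OF bounded_linear_scaleR_right]
                 bounded_linear.has_vector_derivative[OF bl dT[OF u]])+
      moreover have "\<epsilon> *\<^sub>R L ((- v u * mink C (hmul (T u))) *\<^sub>R hmul (T u))
          = (- (c * \<epsilon> * v u) * mink C' (hmul (\<epsilon> *\<^sub>R L (T u)))) *\<^sub>R hmul (\<epsilon> *\<^sub>R L (T u))"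
      proof -
        define M where "M = mink C (hmul (T u))"
        have a: "\<epsilon> *\<^sub>R L ((- v u * M) *\<^sub>R hmul (T u)) = (- \<epsilon> * v u * M) *\<^sub>R L (hmul (T u))"
          by (simp add: linear_scale[OF lin] linear_neg[OF lin])
        have b: "(- (c * \<epsilon> * v u) * mink C' (hmul (\<epsilon> *\<^sub>R L (T u)))) *\<^sub>R hmul (\<epsilon> *\<^sub>R L (T u))
           = (- (c * \<epsilon> * v u) * ((\<epsilon> * \<delta> / c) * M) * (\<epsilon> * \<delta>)) *\<^sub>R L (hmul (T u))"
          unfolding mC M_def[symmetric] by (simp add: hS)
        have eq: "- (c * \<epsilon> * v u) * ((\<epsilon> * \<delta> / c) * M) * (\<epsilon> * \<delta>) = - \<epsilon> * v u * M"
          using e dl c by auto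
        show ?thesis unfolding M_def[symmetric] a b eq by (rule refl)
      qed
      ultimately show "((\<lambda>u. \<epsilon> *\<^sub>R L (T u)) has_vector_derivative
          (- (c * \<epsilon> * v u) * mink C' (hmul (\<epsilon> *\<^sub>R L (T u)))) *\<^sub>R hmul (\<epsilon> *\<^sub>R L (T u))) (at u)"
        by simp
      show "mink (\<epsilon> *\<^sub>R L (T u)) (\<epsilon> *\<^sub>R L (T u)) = 1"
        unfolding mink_scaleL mink_scaleR' mL mT[OF u] using e by auto
    qed
  next
    fix u assume u: "u \<in> I"
    show "fst (\<epsilon> *\<^sub>R L (T u)) > 0" using ep[OF u] by simp
    show "mink C' (hmul (\<epsilon> *\<^sub>R L (T u))) = 0 \<longleftrightarrow> mink C (hmul (T u)) = 0"
      unfolding mC using e dl c by auto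
  qed
qed

lemma reach_sim:
  assumes r: "reach I (\<lambda>u. c *\<^sub>R L (X u)) G" and c: "c > 0" and L: "mink_isometry L"
  shows "\<exists>F. similarity F \<and> F ` X ` I \<subseteq> G"
proof -
  obtain \<sigma>1 \<sigma>2 b1 b2 where s: "\<sigma>1 = 1 \<or> \<sigma>1 = -1" "\<sigma>2 = 1 \<or> \<sigma>2 = -1"
    and G: "\<And>u. u \<in> I \<Longrightarrow> (\<sigma>1 * fst (c *\<^sub>R L (X u)) + b1, \<sigma>2 * snd (c *\<^sub>R L (X u)) + b2) \<in> G"
    using r unfolding reach_def by blast
  define L' where "L' p = (\<sigma>1 * fst (L p), \<sigma>2 * snd (L p))" for p
  have lin: "linear L" and mL: "\<And>p q. mink (L p) (L q) = mink p q" using L by (auto simp: mink_isometry_def)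
  have "linear L'"
  proof (rule linearI)
    fix x y and r :: real
    show "L' (x + y) = L' x + L' y" by (simp add: L'_def linear_add[OF lin] algebra_simps)
    show "L' (r *\<^sub>R x) = r *\<^sub>R L' x" by (simp add: L'_def linear_scale[OF lin] algebra_simps)
  qed
  moreover have "mink (L' p) (L' q) = mink p q" for p q
  proof -
    have "mink (L' p) (L' q) = mink (L p) (L q)"
      using s by (auto simp: L'_def mink_def algebra_simps)
    then show ?thesis using mL by simp
  qed
  ultimately have iso: "mink_isometry L'" by (simp add: mink_isometry_def)
  define F where "F p = c *\<^sub>R L' p + (b1, b2)" for p
  have "similarity F" unfolding similarity_def F_def using c iso by blast
  moreover have "F ` X ` I \<subseteq> G"
  proof
    fix q assume "q \<in> F ` X ` I"
    then obtain u where u: "u \<in> I" and q: "q = F (X u)" by auto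
    have "F (X u) = (\<sigma>1 * fst (c *\<^sub>R L (X u)) + b1, \<sigma>2 * snd (c *\<^sub>R L (X u)) + b2)"
      by (simp add: F_def L'_def algebra_simps)
    then show "q \<in> G" using G[OF u] q by simp
  qed
  ultimately show ?thesis by blast
qed



lemma wrap:
  assumes nf: "NF I X v T C"
    and L: "mink_isometry L" and hL: "\<And>p. hmul (L p) = \<delta> *\<^sub>R L (hmul p)" and dl: "\<delta> = 1 \<or> \<delta> = -1"
    and c: "c > 0" and C': "(1/c) *\<^sub>R L C = C'"
    and R: "\<And>w' S'. NF I (\<lambda>u. c *\<^sub>R L (X u)) w' S' C' \<Longrightarrow> (\<forall>u\<in>I. fst (S' u) > 0) \<Longrightarrow>
       (\<forall>u\<in>I. mink C' (hmul (S' u)) = 0 \<longleftrightarrow> mink C (hmul (T u)) = 0) \<Longrightarrow> reach I (\<lambda>u. c *\<^sub>R L (X u)) G"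
  shows "\<exists>F. similarity F \<and> F ` X ` I \<subseteq> G"
proof -
  obtain w' S' where "NF I (\<lambda>u. c *\<^sub>R L (X u)) w' S' C'" "\<forall>u\<in>I. fst (S' u) > 0"
     "\<forall>u\<in>I. mink C' (hmul (S' u)) = 0 \<longleftrightarrow> mink C (hmul (T u)) = 0"
    using transfer[OF nf L hL dl c C'] by blast
  then have "reach I (\<lambda>u. c *\<^sub>R L (X u)) G" by (rule R)
  then show ?thesis by (rule reach_sim[OF _ c L])
qed

lemma classify:
  assumes tr: "translator I X" and nz: "\<exists>u\<in>I. curv X u \<noteq> 0"
  shows "\<exists>F. similarity F \<and> (F ` X ` I \<subseteq> Gamma1 \<or> F ` X ` I \<subseteq> Gamma2 \<or> F ` X ` I \<subseteq> Gamma3)"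
proof -
  obtain C where sc: "spacelike_curve I X" and tw: "translates_with I X C"
    using tr unfolding translator_def by blast
  have I: "is_interval I" using sc by (simp add: spacelike_curve_def)
  have cv: "curv X u = - mink C (hmul (utan X u))" if "u \<in> I" for u
    using tw that by (simp add: translates_with_def unor_def)
  have nf: "NF I X (speed X) (utan X) C"
    unfolding NF_def
  proof (intro conjI I ballI)
    fix u assume u: "u \<in> I"
    note f = frame[OF sc u]
    show "(X has_vector_derivative speed X u *\<^sub>R utan X u) (at u)" using f by blast
    show "mink (utan X u) (utan X u) = 1" using f by blast
    show "(utan X has_vector_derivative (- speed X u * mink C (hmul (utan X u))) *\<^sub>R hmul (utan X u)) (at u)"
      using f cv[OF u] by simp
  qed
  obtain u0 where u0: "u0 \<in> I" "curv X u0 \<noteq> 0" using nz by blast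
  have m0: "mink C (hmul (utan X u0)) \<noteq> 0" using u0 cv[OF u0(1)] by simp
  obtain p q where C: "C = (p, q)" by (cases C)
  consider (time) "q * q > p * p" | (space) "p * p > q * q" | (light) "p * p = q * q" by linarith
  then show ?thesis
  proof cases
    case time
    define r where "r = sqrt (q * q - p * p)"
    have r0: "r > 0" using time by (simp add: r_def)
    have rr: "r * r = q * q - p * p" using time by (simp add: r_def)
    have iso: "mink_isometry (lm (q/r) (-p/r) (-p/r) (q/r))"
      by (rule lm_iso) (use r0 rr in \<open>simp_all add: field_simps\<close>)
    have C': "(1/r) *\<^sub>R lm (q/r) (-p/r) (-p/r) (q/r) C = (0, 1)"
      using r0 rr by (simp add: C lm_def field_simps)
    have "\<exists>F. similarity F \<and> F ` X ` I \<subseteq> Gamma1"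
      by (rule wrap[OF nf iso lm_h1 _ r0 C']) (auto intro: nf_time)
    then show ?thesis by blast
  next
    case space
    define r where "r = sqrt (p * p - q * q)"
    have r0: "r > 0" using space by (simp add: r_def)
    have rr: "r * r = p * p - q * q" using space by (simp add: r_def)
    have iso: "mink_isometry (lm (p/r) (-q/r) (-q/r) (p/r))"
      by (rule lm_iso) (use r0 rr in \<open>simp_all add: field_simps\<close>)
    have C': "(1/r) *\<^sub>R lm (p/r) (-q/r) (-q/r) (p/r) C = (1, 0)"
      using r0 rr by (simp add: C lm_def field_simps)
    have "\<exists>F. similarity F \<and> F ` X ` I \<subseteq> Gamma2"
    proof (rule wrap[OF nf iso lm_h1 _ r0 C'])
      fix w' S'
      assume a: "NF I (\<lambda>u. r *\<^sub>R lm (p / r) (- q / r) (- q / r) (p / r) (X u)) w' S' (1, 0)"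
        "\<forall>u\<in>I. 0 < fst (S' u)" "\<forall>u\<in>I. (mink (1, 0) (hmul (S' u)) = 0) = (mink C (hmul (utan X u)) = 0)"
      show "reach I (\<lambda>u. r *\<^sub>R lm (p / r) (- q / r) (- q / r) (p / r) (X u)) Gamma2"
        by (rule nf_space[OF a(1) _ u0(1)]) (use a m0 u0 in auto)
    qed auto
    then show ?thesis by blast
  next
    case light
    have p0: "p \<noteq> 0"
    proof
      assume "p = 0"
      then have "q = 0" using light by simp
      then show False using m0 \<open>p = 0\<close> by (simp add: C mink_def)
    qed
    define s where "s = sgn p"
    have s2: "s * s = 1" using p0 by (simp add: s_def sgn_if)
    have sp: "s * p = \<bar>p\<bar>" by (simp add: s_def abs_sgn)
    have c0: "2 * \<bar>p\<bar> > 0" using p0 by simp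
    from light have "p = q \<or> p = - q" by (simp add: square_eq_iff)
    then show ?thesis
    proof
      assume pq: "p = q"
      have iso: "mink_isometry (lm s 0 0 s)" by (rule lm_iso) (use s2 in simp_all)
      have C': "(1 / (2 * \<bar>p\<bar>)) *\<^sub>R lm s 0 0 s C = (1/2, 1/2)"
        using p0 sp by (simp add: C pq[symmetric] lm_def)
      have "\<exists>F. similarity F \<and> F ` X ` I \<subseteq> Gamma3"
        by (rule wrap[OF nf iso lm_h1 _ c0 C']) (auto intro: nf_light)
      then show ?thesis by blast
    next
      assume pq: "p = - q"
      have iso: "mink_isometry (lm s 0 0 (-s))" by (rule lm_iso) (use s2 in simp_all)
      have C': "(1 / (2 * \<bar>p\<bar>)) *\<^sub>R lm s 0 0 (-s) C = (1/2, 1/2)"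
        using p0 sp pq by (simp add: C lm_def)
      have "\<exists>F. similarity F \<and> F ` X ` I \<subseteq> Gamma3"
        by (rule wrap[OF nf iso lm_h2 _ c0 C']) (auto intro: nf_light)
      then show ?thesis by blast
    qed
  qed
qed



definition nu :: "real \<times> real \<Rightarrow> real" where "nu p = fst p + snd p"
definition ne :: "real \<times> real \<Rightarrow> real" where "ne p = fst p - snd p"
definition G1 :: "real \<Rightarrow> real \<Rightarrow> bool" where "G1 u v \<longleftrightarrow> exp v + exp (- u) = 2"
definition G2 :: "real \<Rightarrow> real \<Rightarrow> bool" where "G2 u v \<longleftrightarrow> exp u - exp v = 2"
definition G3 :: "real \<Rightarrow> real \<Rightarrow> bool" where "G3 u v \<longleftrightarrow> u = exp v"
definition pt :: "real \<Rightarrow> real \<Rightarrow> real \<times> real" where "pt u v = ((u + v) / 2, (u - v) / 2)"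

lemma nu_pt [simp]: "nu (pt u v) = u" and ne_pt [simp]: "ne (pt u v) = v"
  by (simp_all add: nu_def ne_def pt_def field_simps)

lemma mem1: "p \<in> Gamma1 \<longleftrightarrow> G1 (nu p) (ne p)"
proof -
  obtain x y where p: "p = (x, y)" by (cases p)
  have "cosh x = exp y \<longleftrightarrow> (exp x + exp (- x)) / 2 = exp y" by (simp add: cosh_def)
  also have "\<dots> \<longleftrightarrow> exp x * exp (- y) + exp (- x) * exp (- y) = 2"
    by (simp add: exp_minus field_simps)
  also have "\<dots> \<longleftrightarrow> exp (x - y) + exp (- (x + y)) = 2"
    by (simp add: exp_add[symmetric] algebra_simps)
  finally show ?thesis by (simp add: p Gamma1_def G1_def nu_def ne_def)
qed

lemma mem2: "p \<in> Gamma2 \<longleftrightarrow> G2 (nu p) (ne p)"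
proof -
  obtain x y where p: "p = (x, y)" by (cases p)
  have "sinh y = exp (- x) \<longleftrightarrow> (exp y - exp (- y)) / 2 = exp (- x)" by (simp add: sinh_def)
  also have "\<dots> \<longleftrightarrow> exp x * exp y - exp x * exp (- y) = 2"
    by (simp add: exp_minus field_simps) (rule eq_commute)
  also have "\<dots> \<longleftrightarrow> exp (x + y) - exp (x - y) = 2"
    by (simp add: exp_add[symmetric] algebra_simps)
  finally show ?thesis by (simp add: p Gamma2_def G2_def nu_def ne_def)
qed

lemma mem3: "p \<in> Gamma3 \<longleftrightarrow> G3 (nu p) (ne p)"
  by (cases p) (simp add: Gamma3_def G3_def nu_def ne_def)

lemma iso_null:
  assumes "mink_isometry L"
  shows "\<exists>l. l \<noteq> 0 \<and> ((\<forall>p. nu (L p) = l * nu p \<and> ne (L p) = ne p / l)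
                      \<or> (\<forall>p. nu (L p) = l * ne p \<and> ne (L p) = nu p / l))"
proof -
  have lin: "linear L" and mL: "\<And>p q. mink (L p) (L q) = mink p q"
    using assms by (auto simp: mink_isometry_def)
  obtain a1 a2 where a: "L (1, 1) = (a1, a2)" by (cases "L (1, 1)")
  obtain b1 b2 where b: "L (1, -1) = (b1, b2)" by (cases "L (1, -1)")
  have aa: "a1 * a1 = a2 * a2" using mL[of "(1,1)" "(1,1)"] by (simp add: a mink_def)
  have bb: "b1 * b1 = b2 * b2" using mL[of "(1,-1)" "(1,-1)"] by (simp add: b mink_def)
  have ab: "a1 * b1 - a2 * b2 = 2" using mL[of "(1,1)" "(1,-1)"] by (simp add: a b mink_def)
  have dec: "p = (nu p / 2) *\<^sub>R (1, 1) + (ne p / 2) *\<^sub>R (1, -1)" for p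
    by (cases p) (simp add: nu_def ne_def field_simps)
  have Lp: "L p = (nu p / 2) *\<^sub>R (a1, a2) + (ne p / 2) *\<^sub>R (b1, b2)" for p
  proof -
    have "L p = L ((nu p / 2) *\<^sub>R (1, 1) + (ne p / 2) *\<^sub>R (1, -1))" by (rule arg_cong[where f=L], rule dec)
    also have "\<dots> = (nu p / 2) *\<^sub>R (a1, a2) + (ne p / 2) *\<^sub>R (b1, b2)"
      by (simp only: linear_add[OF lin] linear_scale[OF lin] a b)
    finally show ?thesis .
  qed
  have nuL: "nu (L p) = nu p / 2 * (a1 + a2) + ne p / 2 * (b1 + b2)" for p
    by (simp add: Lp nu_def field_simps)
  have neL: "ne (L p) = nu p / 2 * (a1 - a2) + ne p / 2 * (b1 - b2)" for p
    by (simp add: Lp ne_def field_simps)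
  from aa have "a2 = a1 \<or> a2 = - a1" by (simp add: square_eq_iff) linarith
  from bb have "b2 = b1 \<or> b2 = - b1" by (simp add: square_eq_iff) linarith
  show ?thesis
  proof (cases "a2 = a1")
    case True
    then have "b2 = - b1" using ab \<open>b2 = b1 \<or> b2 = - b1\<close> by auto
    then have ab1: "a1 * b1 = 1" using ab True by simp
    then have a0: "a1 \<noteq> 0" by auto
    have "b1 = 1 / a1" using ab1 a0 by (simp add: field_simps)
    then have "\<forall>p. nu (L p) = a1 * nu p \<and> ne (L p) = ne p / a1"
      using True \<open>b2 = - b1\<close> by (simp add: nuL neL field_simps)
    then show ?thesis using a0 by blast
  next
    case False
    then have a2: "a2 = - a1" using \<open>a2 = a1 \<or> a2 = - a1\<close> by simp
    then have "b2 = b1" using ab \<open>b2 = b1 \<or> b2 = - b1\<close> by auto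
    then have ab1: "a1 * b1 = 1" using ab a2 by simp
    then have b0: "b1 \<noteq> 0" by auto
    have "a1 = 1 / b1" using ab1 b0 by (simp add: field_simps)
    then have "\<forall>p. nu (L p) = b1 * ne p \<and> ne (L p) = nu p / b1"
      using a2 \<open>b2 = b1\<close> by (simp add: nuL neL field_simps)
    then show ?thesis using b0 by blast
  qed
qed

lemma sim_null:
  assumes "similarity F"
  shows "\<exists>A A' B B'. A \<noteq> 0 \<and> A' \<noteq> 0 \<and>
     ((\<forall>p. nu (F p) = A * nu p + B \<and> ne (F p) = A' * ne p + B')
    \<or> (\<forall>p. nu (F p) = A * ne p + B \<and> ne (F p) = A' * nu p + B'))"
proof -
  obtain c L b where c: "c > 0" and L: "mink_isometry L" and F: "F = (\<lambda>p. c *\<^sub>R L p + b)"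
    using assms unfolding similarity_def by blast
  obtain l where l: "l \<noteq> 0" and h: "(\<forall>p. nu (L p) = l * nu p \<and> ne (L p) = ne p / l)
                      \<or> (\<forall>p. nu (L p) = l * ne p \<and> ne (L p) = nu p / l)"
    using iso_null[OF L] by blast
  have nuF: "nu (F p) = c * nu (L p) + nu b" and neF: "ne (F p) = c * ne (L p) + ne b" for p
    by (simp_all add: F nu_def ne_def algebra_simps)
  have "c * l \<noteq> 0" "c / l \<noteq> 0" using c l by auto
  moreover have "(\<forall>p. nu (F p) = (c * l) * nu p + nu b \<and> ne (F p) = (c / l) * ne p + ne b)
    \<or> (\<forall>p. nu (F p) = (c * l) * ne p + nu b \<and> ne (F p) = (c / l) * nu p + ne b)"
    using h by (auto simp: nuF neF)
  ultimately show ?thesis by blast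
qed



lemma lin_bd: "\<bar>v\<bar> \<le> 1 \<Longrightarrow> A * v + B \<le> \<bar>A\<bar> + \<bar>B::real\<bar>"
proof -
  assume v: "\<bar>v\<bar> \<le> 1"
  have "\<bar>A * v\<bar> = \<bar>A\<bar> * \<bar>v\<bar>" by (simp add: abs_mult)
  also have "\<dots> \<le> \<bar>A\<bar>" using mult_left_le[OF v, of "\<bar>A\<bar>"] by simp
  finally show ?thesis by linarith
qed

lemma hA1: "(A::real) > 0 \<Longrightarrow> A * max 0 (c / A) \<ge> c"
proof -
  assume A: "A > 0"
  have "A * (c / A) \<le> A * max 0 (c / A)" using A by (intro mult_left_mono) auto
  then show ?thesis using A by simp
qed
lemma hA2: "(A::real) < 0 \<Longrightarrow> A * max 0 (c / A) \<le> c"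
proof -
  assume A: "A < 0"
  have "A * max 0 (c / A) \<le> A * (c / A)" using A by (intro mult_left_mono_neg) auto
  then show ?thesis using A by simp
qed
lemma hA3: "(A::real) > 0 \<Longrightarrow> A * min 0 (c / A) \<le> c"
proof -
  assume A: "A > 0"
  have "A * min 0 (c / A) \<le> A * (c / A)" using A by (intro mult_left_mono) auto
  then show ?thesis using A by simp
qed
lemma hA4: "(A::real) < 0 \<Longrightarrow> A * min 0 (c / A) \<ge> c"
proof -
  assume A: "A < 0"
  have "A * (c / A) \<le> A * min 0 (c / A)" using A by (intro mult_left_mono_neg) auto
  then show ?thesis using A by simp
qed

lemma exp_lin:
  assumes a: "(a::real) > 0"
  shows "\<exists>s\<ge>0. a * exp s > M + N * s"
proof -
  define K where "K = \<bar>M\<bar> + \<bar>N\<bar> + 1"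
  define s where "s = 2 * K / a + 2"
  have K0: "K > 0" by (simp add: K_def)
  have s1: "s \<ge> 1" using K0 a by (simp add: s_def)
  have e: "exp s \<ge> s * s / 2"
    using exp_lower_Taylor_quadratic[of s] s1 by (simp add: power2_eq_square)
  have "a * exp s \<ge> a * (s * s / 2)" using e a by simp
  moreover have "a * (s * s / 2) = (K + a) * s" using a by (simp add: s_def field_simps)
  moreover have "(K + a) * s = \<bar>M\<bar> * s + \<bar>N\<bar> * s + s + a * s" by (simp add: K_def algebra_simps)
  moreover have "\<bar>M\<bar> * s \<ge> \<bar>M\<bar>" using s1 by (simp add: mult_le_cancel_left1)
  moreover have "\<bar>N\<bar> * s \<ge> N * s" using s1 by (simp add: mult_right_mono)
  moreover have "a * s > 0" using a s1 by simp
  moreover have "\<bar>M\<bar> \<ge> M" by simp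
  moreover note s1
  ultimately have "a * exp s > M + N * s" by linarith
  then show ?thesis using s1 by (intro exI[of _ s]) auto
qed

lemma exp_lin2:
  assumes a: "(a::real) > 0" and al: "\<alpha> > 0"
  shows "\<exists>t\<ge>0. a * exp (\<alpha> * t) > M + N * t"
proof -
  obtain s where s: "s \<ge> 0" "a * exp s > M + (N / \<alpha>) * s" using exp_lin[OF a] by blast
  show ?thesis
    by (rule exI[of _ "s / \<alpha>"]) (use s al in simp)
qed

lemma ln2exp: "ln (2 + exp z) < 2 + \<bar>z::real\<bar>"
proof -
  have "exp z \<le> exp \<bar>z\<bar>" using abs_ge_self[of z] by simp
  moreover have "1 \<le> exp \<bar>z\<bar>" by simp
  ultimately have "2 + exp z \<le> 3 * exp \<bar>z\<bar>" by linarith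
  moreover have "3 < exp (2::real)"
    using exp_lower_Taylor_quadratic[of 2] by (simp add: power2_eq_square)
  moreover have "3 * exp \<bar>z\<bar> < exp 2 * exp \<bar>z\<bar>"
    using \<open>3 < exp (2::real)\<close> by (intro mult_strict_right_mono) auto
  ultimately have "2 + exp z < exp 2 * exp \<bar>z\<bar>" by linarith
  then have "2 + exp z < exp (2 + \<bar>z\<bar>)" by (simp add: exp_add)
  then show ?thesis using ln_less_cancel_iff[of "2 + exp z" "exp (2 + \<bar>z\<bar>)"]
    by (simp add: add_pos_pos)
qed

lemma G1_b: "G1 u v \<Longrightarrow> v < ln 2 \<and> - ln 2 < u"
proof -
  assume "G1 u v"
  then have e: "exp v + exp (- u) = 2" by (simp add: G1_def)
  have "exp v < 2" using e exp_gt_zero[of "- u"] by linarith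
  then have "v < ln 2" by (metis exp_less_cancel_iff exp_ln zero_less_numeral)
  moreover have "exp (- u) < 2" using e exp_gt_zero[of v] by linarith
  then have "- u < ln 2" by (metis exp_less_cancel_iff exp_ln zero_less_numeral)
  ultimately show ?thesis by simp
qed

lemma G1w_u: "u \<ge> 0 \<Longrightarrow> G1 u (ln (2 - exp (- u))) \<and> \<bar>ln (2 - exp (- u))\<bar> \<le> 1"
proof -
  assume u: "u \<ge> 0"
  have a: "exp (- u) \<le> 1" using u by simp
  have b: "exp (- u) > 0" by simp
  have pos: "2 - exp (- u) > 0" using a by linarith
  then have "G1 u (ln (2 - exp (- u)))" by (simp add: G1_def)
  moreover have "0 \<le> ln (2 - exp (- u))" using a by simp
  moreover have "ln (2 - exp (- u)) \<le> ln 2" using pos b ln_le_cancel_iff[of "2 - exp (-u)" 2] by simp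
  moreover have "ln (2::real) \<le> 1" using ln_2_less_1 by simp
  ultimately show ?thesis by simp
qed

lemma G1w_v: "v \<le> 0 \<Longrightarrow> G1 (- ln (2 - exp v)) v \<and> \<bar>- ln (2 - exp v)\<bar> \<le> 1"
proof -
  assume v: "v \<le> 0"
  have a: "exp v \<le> 1" using v by simp
  have b: "exp v > 0" by simp
  have pos: "2 - exp v > 0" using a by linarith
  then have "G1 (- ln (2 - exp v)) v" by (simp add: G1_def)
  moreover have "0 \<le> ln (2 - exp v)" using a by simp
  moreover have "ln (2 - exp v) \<le> ln 2" using pos b ln_le_cancel_iff[of "2 - exp v" 2] by simp
  moreover have "ln (2::real) \<le> 1" using ln_2_less_1 by simp
  ultimately show ?thesis by simp
qed

lemma G2w: "G2 (ln (2 + exp v)) v"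
  by (simp add: G2_def add_pos_pos)

lemma G2_b: "G2 u v \<Longrightarrow> exp u > 2"
  unfolding G2_def using exp_gt_zero[of v] by linarith

lemma G3w: "G3 (exp v) v" by (simp add: G3_def)



lemma c21N:
  assumes "A' \<noteq> 0" and H: "\<And>u v. G2 u v \<Longrightarrow> G1 (A * u + B) (A' * v + B')" shows False
proof -
  define v where "v = (ln 2 - B') / A'"
  have "A' * v + B' = ln 2" using assms(1) by (simp add: v_def)
  then show False using G1_b[OF H[OF G2w[of v]]] by simp
qed

lemma c21S:
  assumes "A \<noteq> 0" and H: "\<And>u v. G2 u v \<Longrightarrow> G1 (A * v + B) (A' * u + B')" shows False
proof -
  define v where "v = (- ln 2 - B) / A"
  have "A * v + B = - ln 2" using assms(1) by (simp add: v_def)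
  then show False using G1_b[OF H[OF G2w[of v]]] by simp
qed

lemma c31N:
  assumes "A' \<noteq> 0" and H: "\<And>u v. G3 u v \<Longrightarrow> G1 (A * u + B) (A' * v + B')" shows False
proof -
  define v where "v = (ln 2 - B') / A'"
  have "A' * v + B' = ln 2" using assms(1) by (simp add: v_def)
  then show False using G1_b[OF H[OF G3w[of v]]] by simp
qed

lemma c31S:
  assumes "A \<noteq> 0" and H: "\<And>u v. G3 u v \<Longrightarrow> G1 (A * v + B) (A' * u + B')" shows False
proof -
  define v where "v = (- ln 2 - B) / A"
  have "A * v + B = - ln 2" using assms(1) by (simp add: v_def)
  then show False using G1_b[OF H[OF G3w[of v]]] by simp
qed

lemma c32S:
  assumes "A \<noteq> 0" and H: "\<And>u v. G3 u v \<Longrightarrow> G2 (A * v + B) (A' * u + B')" shows False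
proof -
  define v where "v = - B / A"
  have "A * v + B = 0" using assms(1) by (simp add: v_def)
  then show False using G2_b[OF H[OF G3w[of v]]] by simp
qed

lemma c23S:
  assumes "A \<noteq> 0" and H: "\<And>u v. G2 u v \<Longrightarrow> G3 (A * v + B) (A' * u + B')" shows False
proof -
  define v where "v = - B / A"
  have "A * v + B = 0" using assms(1) by (simp add: v_def)
  then show False using H[OF G2w[of v]] by (simp add: G3_def)
qed

lemma c12N:
  assumes "A \<noteq> 0" and H: "\<And>u v. G1 u v \<Longrightarrow> G2 (A * u + B) (A' * v + B')" shows False
proof -
  have P: "exp (A * u + B) = 2 + exp (A' * ln (2 - exp (- u)) + B') \<and> A' * ln (2 - exp (- u)) + B' \<le> \<bar>A'\<bar> + \<bar>B'\<bar>"
    if u: "u \<ge> 0" for u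
  proof -
    note w = G1w_u[OF u]
    have "G2 (A * u + B) (A' * ln (2 - exp (- u)) + B')" using H w by blast
    then show ?thesis using lin_bd w by (simp add: G2_def)
  qed
  define K where "K = \<bar>A'\<bar> + \<bar>B'\<bar>"
  show False
  proof (cases "A > 0")
    case True
    define u where "u = max 0 ((ln (3 + exp K) - B) / A)"
    have u0: "u \<ge> 0" by (simp add: u_def)
    have "A * u \<ge> ln (3 + exp K) - B" using hA1[OF True] by (simp add: u_def)
    then have "exp (A * u + B) \<ge> exp (ln (3 + exp K))" by simp
    then have "exp (A * u + B) \<ge> 3 + exp K" by (simp add: add_pos_pos)
    moreover have "exp (A' * ln (2 - exp (- u)) + B') \<le> exp K" using P[OF u0] by (simp add: K_def)
    ultimately show False using P[OF u0] by linarith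
  next
    case False
    then have A: "A < 0" using assms(1) by simp
    define u where "u = max 0 ((ln 2 - B) / A)"
    have u0: "u \<ge> 0" by (simp add: u_def)
    have "A * u \<le> ln 2 - B" using hA2[OF A] by (simp add: u_def)
    then have "exp (A * u + B) \<le> exp (ln 2)" by (subst exp_le_cancel_iff) linarith
    then have "exp (A * u + B) \<le> 2" by simp
    then show False using P[OF u0] exp_gt_zero[of "A' * ln (2 - exp (- u)) + B'"] by linarith
  qed
qed

lemma c12S:
  assumes "A \<noteq> 0" and H: "\<And>u v. G1 u v \<Longrightarrow> G2 (A * v + B) (A' * u + B')" shows False
proof -
  have P: "exp (A * v + B) = 2 + exp (A' * (- ln (2 - exp v)) + B') \<and> A' * (- ln (2 - exp v)) + B' \<le> \<bar>A'\<bar> + \<bar>B'\<bar>"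
    if v: "v \<le> 0" for v
  proof -
    note w = G1w_v[OF v]
    have "G2 (A * v + B) (A' * (- ln (2 - exp v)) + B')" using H w by blast
    moreover have "A' * (- ln (2 - exp v)) + B' \<le> \<bar>A'\<bar> + \<bar>B'\<bar>" by (rule lin_bd) (use w in simp)
    ultimately show ?thesis by (simp add: G2_def)
  qed
  define K where "K = \<bar>A'\<bar> + \<bar>B'\<bar>"
  show False
  proof (cases "A > 0")
    case False
    then have A: "A < 0" using assms(1) by simp
    define v where "v = min 0 ((ln (3 + exp K) - B) / A)"
    have v0: "v \<le> 0" by (simp add: v_def)
    have "A * v \<ge> ln (3 + exp K) - B" using hA4[OF A] by (simp add: v_def)
    then have "exp (A * v + B) \<ge> exp (ln (3 + exp K))" by simp
    then have "exp (A * v + B) \<ge> 3 + exp K" by (simp add: add_pos_pos)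
    moreover have "exp (A' * (- ln (2 - exp v)) + B') \<le> exp K" using P[OF v0] by (simp add: K_def)
    ultimately show False using P[OF v0] by linarith
  next
    case True
    define v where "v = min 0 (- B / A)"
    have v0: "v \<le> 0" by (simp add: v_def)
    have "A * v \<le> - B" using hA3[OF True, of "- B"] by (simp add: v_def)
    then have "exp (A * v + B) \<le> exp 0" by simp
    then have "exp (A * v + B) \<le> 1" by simp
    then show False using P[OF v0] exp_gt_zero[of "A' * (- ln (2 - exp v)) + B'"] by linarith
  qed
qed

lemma c13N:
  assumes "A \<noteq> 0" and H: "\<And>u v. G1 u v \<Longrightarrow> G3 (A * u + B) (A' * v + B')" shows False
proof -
  have P: "A * u + B = exp (A' * ln (2 - exp (- u)) + B') \<and> A' * ln (2 - exp (- u)) + B' \<le> \<bar>A'\<bar> + \<bar>B'\<bar>"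
    if u: "u \<ge> 0" for u
  proof -
    note w = G1w_u[OF u]
    have "G3 (A * u + B) (A' * ln (2 - exp (- u)) + B')" using H w by blast
    then show ?thesis using lin_bd w by (simp add: G3_def)
  qed
  define K where "K = \<bar>A'\<bar> + \<bar>B'\<bar>"
  show False
  proof (cases "A > 0")
    case True
    define u where "u = max 0 ((exp K + 1 - B) / A)"
    have u0: "u \<ge> 0" by (simp add: u_def)
    have "A * u \<ge> exp K + 1 - B" using hA1[OF True] by (simp add: u_def)
    moreover have "exp (A' * ln (2 - exp (- u)) + B') \<le> exp K" using P[OF u0] by (simp add: K_def)
    ultimately show False using P[OF u0] by linarith
  next
    case False
    then have A: "A < 0" using assms(1) by simp
    define u where "u = max 0 (- B / A)"
    have u0: "u \<ge> 0" by (simp add: u_def)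
    have "A * u \<le> - B" using hA2[OF A, of "- B"] by (simp add: u_def)
    then show False using P[OF u0] exp_gt_zero[of "A' * ln (2 - exp (- u)) + B'"] by linarith
  qed
qed

lemma c13S:
  assumes "A \<noteq> 0" and H: "\<And>u v. G1 u v \<Longrightarrow> G3 (A * v + B) (A' * u + B')" shows False
proof -
  have P: "A * v + B = exp (A' * (- ln (2 - exp v)) + B') \<and> A' * (- ln (2 - exp v)) + B' \<le> \<bar>A'\<bar> + \<bar>B'\<bar>"
    if v: "v \<le> 0" for v
  proof -
    note w = G1w_v[OF v]
    have "G3 (A * v + B) (A' * (- ln (2 - exp v)) + B')" using H w by blast
    moreover have "A' * (- ln (2 - exp v)) + B' \<le> \<bar>A'\<bar> + \<bar>B'\<bar>" by (rule lin_bd) (use w in simp)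
    ultimately show ?thesis by (simp add: G3_def)
  qed
  define K where "K = \<bar>A'\<bar> + \<bar>B'\<bar>"
  show False
  proof (cases "A > 0")
    case False
    then have A: "A < 0" using assms(1) by simp
    define v where "v = min 0 ((exp K + 1 - B) / A)"
    have v0: "v \<le> 0" by (simp add: v_def)
    have "A * v \<ge> exp K + 1 - B" using hA4[OF A] by (simp add: v_def)
    moreover have "exp (A' * (- ln (2 - exp v)) + B') \<le> exp K" using P[OF v0] by (simp add: K_def)
    ultimately show False using P[OF v0] by linarith
  next
    case True
    define v where "v = min 0 (- B / A)"
    have v0: "v \<le> 0" by (simp add: v_def)
    have "A * v \<le> - B" using hA3[OF True, of "- B"] by (simp add: v_def)
    then show False using P[OF v0] exp_gt_zero[of "A' * (- ln (2 - exp v)) + B'"] by linarith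
  qed
qed

lemma c32N:
  assumes "A \<noteq> 0" and H: "\<And>u v. G3 u v \<Longrightarrow> G2 (A * u + B) (A' * v + B')" shows False
proof -
  have P: "exp (A * exp v + B) = 2 + exp (A' * v + B')" for v
    using H[OF G3w[of v]] by (simp add: G2_def)
  show False
  proof (cases "A > 0")
    case True
    obtain v where v: "v \<ge> 0" "A * exp v > (2 + \<bar>B'\<bar> - B) + \<bar>A'\<bar> * v"
      using exp_lin[OF True] by blast
    have "A * exp v + B = ln (2 + exp (A' * v + B'))"
      using P[of v] by (metis ln_exp)
    also have "\<dots> < 2 + \<bar>A' * v + B'\<bar>" by (rule ln2exp)
    also have "\<dots> \<le> 2 + \<bar>A'\<bar> * v + \<bar>B'\<bar>" using v(1) by (simp add: abs_mult abs_triangle_ineq[THEN order_trans])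
    finally show False using v(2) by linarith
  next
    case False
    then have A: "A < 0" using assms(1) by simp
    define v where "v = ln (\<bar>B\<bar> / (- A) + 1)"
    have pos: "\<bar>B\<bar> / (- A) + 1 > 0" using A by (simp add: add_nonneg_pos)
    have "exp v = \<bar>B\<bar> / (- A) + 1" using pos by (simp add: v_def)
    then have "A * exp v = - \<bar>B\<bar> + A" using A by (simp add: field_simps)
    then have "A * exp v + B < 0" using A by linarith
    then have "exp (A * exp v + B) < 1" by simp
    then show False using P[of v] exp_gt_zero[of "A' * v + B'"] by linarith
  qed
qed

lemma c23N:
  assumes "A' \<noteq> 0" and H: "\<And>u v. G2 u v \<Longrightarrow> G3 (A * u + B) (A' * v + B')" shows False
proof -
  have P: "A * ln (2 + exp v) + B = exp (A' * v + B')" for v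
    using H[OF G2w[of v]] by (simp add: G3_def)
  have al: "\<bar>A'\<bar> > 0" using assms(1) by simp
  obtain t where t: "t \<ge> 0" "exp B' * exp (\<bar>A'\<bar> * t) > (2 * \<bar>A\<bar> + \<bar>B\<bar>) + \<bar>A\<bar> * t"
    using exp_lin2[OF exp_gt_zero al] by blast
  define v where "v = sgn A' * t"
  have av: "A' * v = \<bar>A'\<bar> * t" by (simp add: v_def abs_sgn mult.assoc[symmetric] mult.commute[of A'] sgn_mult_abs)
  have vt: "\<bar>v\<bar> = t" using t(1) assms(1) by (simp add: v_def abs_mult)
  have "exp (A' * v + B') = exp B' * exp (\<bar>A'\<bar> * t)" by (simp add: av exp_add mult.commute)
  moreover have "\<bar>A * ln (2 + exp v) + B\<bar> \<le> \<bar>A\<bar> * (2 + t) + \<bar>B\<bar>"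
  proof -
    have l0: "0 \<le> ln (2 + exp v)" by (simp add: add_pos_pos)
    have l1: "ln (2 + exp v) \<le> 2 + t" using ln2exp[of v] vt by simp
    have "\<bar>A * ln (2 + exp v)\<bar> = \<bar>A\<bar> * ln (2 + exp v)" using l0 by (simp add: abs_mult)
    also have "\<dots> \<le> \<bar>A\<bar> * (2 + t)" using l1 by (simp add: mult_left_mono)
    finally show ?thesis by (smt (verit) abs_triangle_ineq)
  qed
  ultimately show False using P[of v] t(2) by (simp add: algebra_simps)
qed



lemma ineq_one:
  assumes sim: "similarity F"
    and mS: "\<And>p. p \<in> S \<longleftrightarrow> P (nu p) (ne p)" and mT: "\<And>p. p \<in> T \<longleftrightarrow> Q (nu p) (ne p)"
    and bN: "\<And>A A' B B'. A \<noteq> 0 \<Longrightarrow> A' \<noteq> 0 \<Longrightarrow> (\<And>u v. P u v \<Longrightarrow> Q (A * u + B) (A' * v + B')) \<Longrightarrow> False"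
    and bS: "\<And>A A' B B'. A \<noteq> 0 \<Longrightarrow> A' \<noteq> 0 \<Longrightarrow> (\<And>u v. P u v \<Longrightarrow> Q (A * v + B) (A' * u + B')) \<Longrightarrow> False"
  shows "\<not> F ` S \<subseteq> T"
proof
  assume inc: "F ` S \<subseteq> T"
  have H: "Q (nu (F (pt u v))) (ne (F (pt u v)))" if "P u v" for u v
  proof -
    have "pt u v \<in> S" using that mS by simp
    then have "F (pt u v) \<in> T" using inc by blast
    then show ?thesis using mT by simp
  qed
  obtain A A' B B' where A: "A \<noteq> 0" "A' \<noteq> 0" and md:
     "(\<forall>p. nu (F p) = A * nu p + B \<and> ne (F p) = A' * ne p + B')
    \<or> (\<forall>p. nu (F p) = A * ne p + B \<and> ne (F p) = A' * nu p + B')"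
    using sim_null[OF sim] by blast
  from md show False
  proof
    assume m: "\<forall>p. nu (F p) = A * nu p + B \<and> ne (F p) = A' * ne p + B'"
    show False by (rule bN[OF A]) (use H m in simp)
  next
    assume m: "\<forall>p. nu (F p) = A * ne p + B \<and> ne (F p) = A' * nu p + B'"
    show False by (rule bS[OF A]) (use H m in simp)
  qed
qed

lemma inequiv:
  assumes "similarity F"
  shows "\<not> F ` Gamma1 \<subseteq> Gamma2 \<and> \<not> F ` Gamma1 \<subseteq> Gamma3 \<and>
        \<not> F ` Gamma2 \<subseteq> Gamma1 \<and> \<not> F ` Gamma2 \<subseteq> Gamma3 \<and>
        \<not> F ` Gamma3 \<subseteq> Gamma1 \<and> \<not> F ` Gamma3 \<subseteq> Gamma2"
proof (intro conjI)
  show "\<not> F ` Gamma1 \<subseteq> Gamma2"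
  proof (rule ineq_one[OF assms mem1 mem2])
    fix A A' B B' assume a1: "A \<noteq> 0" and a2: "A' \<noteq> 0" and h: "\<And>u v. G1 u v \<Longrightarrow> G2 (A * u + B) (A' * v + B')"
    show False by (rule c12N[OF a1 h])
  next
    fix A A' B B' assume a1: "A \<noteq> 0" and a2: "A' \<noteq> 0" and h: "\<And>u v. G1 u v \<Longrightarrow> G2 (A * v + B) (A' * u + B')"
    show False by (rule c12S[OF a1 h])
  qed
  show "\<not> F ` Gamma1 \<subseteq> Gamma3"
  proof (rule ineq_one[OF assms mem1 mem3])
    fix A A' B B' assume a1: "A \<noteq> 0" and a2: "A' \<noteq> 0" and h: "\<And>u v. G1 u v \<Longrightarrow> G3 (A * u + B) (A' * v + B')"
    show False by (rule c13N[OF a1 h])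
  next
    fix A A' B B' assume a1: "A \<noteq> 0" and a2: "A' \<noteq> 0" and h: "\<And>u v. G1 u v \<Longrightarrow> G3 (A * v + B) (A' * u + B')"
    show False by (rule c13S[OF a1 h])
  qed
  show "\<not> F ` Gamma2 \<subseteq> Gamma1"
  proof (rule ineq_one[OF assms mem2 mem1])
    fix A A' B B' assume a1: "A \<noteq> 0" and a2: "A' \<noteq> 0" and h: "\<And>u v. G2 u v \<Longrightarrow> G1 (A * u + B) (A' * v + B')"
    show False by (rule c21N[OF a2 h])
  next
    fix A A' B B' assume a1: "A \<noteq> 0" and a2: "A' \<noteq> 0" and h: "\<And>u v. G2 u v \<Longrightarrow> G1 (A * v + B) (A' * u + B')"
    show False by (rule c21S[OF a1 h])
  qed
  show "\<not> F ` Gamma2 \<subseteq> Gamma3"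
  proof (rule ineq_one[OF assms mem2 mem3])
    fix A A' B B' assume a1: "A \<noteq> 0" and a2: "A' \<noteq> 0" and h: "\<And>u v. G2 u v \<Longrightarrow> G3 (A * u + B) (A' * v + B')"
    show False by (rule c23N[OF a2 h])
  next
    fix A A' B B' assume a1: "A \<noteq> 0" and a2: "A' \<noteq> 0" and h: "\<And>u v. G2 u v \<Longrightarrow> G3 (A * v + B) (A' * u + B')"
    show False by (rule c23S[OF a1 h])
  qed
  show "\<not> F ` Gamma3 \<subseteq> Gamma1"
  proof (rule ineq_one[OF assms mem3 mem1])
    fix A A' B B' assume a1: "A \<noteq> 0" and a2: "A' \<noteq> 0" and h: "\<And>u v. G3 u v \<Longrightarrow> G1 (A * u + B) (A' * v + B')"
    show False by (rule c31N[OF a2 h])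
  next
    fix A A' B B' assume a1: "A \<noteq> 0" and a2: "A' \<noteq> 0" and h: "\<And>u v. G3 u v \<Longrightarrow> G1 (A * v + B) (A' * u + B')"
    show False by (rule c31S[OF a1 h])
  qed
  show "\<not> F ` Gamma3 \<subseteq> Gamma2"
  proof (rule ineq_one[OF assms mem3 mem2])
    fix A A' B B' assume a1: "A \<noteq> 0" and a2: "A' \<noteq> 0" and h: "\<And>u v. G3 u v \<Longrightarrow> G2 (A * u + B) (A' * v + B')"
    show False by (rule c32N[OF a1 h])
  next
    fix A A' B B' assume a1: "A \<noteq> 0" and a2: "A' \<noteq> 0" and h: "\<And>u v. G3 u v \<Longrightarrow> G2 (A * v + B) (A' * u + B')"
    show False by (rule c32S[OF a1 h])
  qed
qed

theorem theorem5p1: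
  shows
  \<comment> \<open>the three curves are space-like translators, parametrised by arc length,
      with the stated curvature and translation direction\<close>
  "(spacelike_curve {-pi/2<..<pi/2} gamma1 \<and> gamma1 ` {-pi/2<..<pi/2} = Gamma1
      \<and> (\<forall>s\<in>{-pi/2<..<pi/2}. speed gamma1 s = 1 \<and> curv gamma1 s = 1 / cos s)
      \<and> translates_with {-pi/2<..<pi/2} gamma1 (0, 1))
   \<and> (spacelike_curve {0<..} gamma2 \<and> gamma2 ` {0<..} = Gamma2
      \<and> (\<forall>s\<in>{0<..}. speed gamma2 s = 1 \<and> curv gamma2 s = 1 / sinh s)
      \<and> translates_with {0<..} gamma2 (1, 0))
   \<and> (spacelike_curve {0<..} gamma3 \<and> gamma3 ` {0<..} = Gamma3
      \<and> (\<forall>s\<in>{0<..}. speed gamma3 s = 1 \<and> curv gamma3 s = 1 / s)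
      \<and> translates_with {0<..} gamma3 (1/2, 1/2))
   \<and> \<comment> \<open>every (non-straight) space-like translator is one of them up to similarity\<close>
     (\<forall>I X. translator I X \<and> (\<exists>u\<in>I. curv X u \<noteq> 0) \<longrightarrow>
        (\<exists>F. similarity F \<and>
           (F ` X ` I \<subseteq> Gamma1 \<or> F ` X ` I \<subseteq> Gamma2 \<or> F ` X ` I \<subseteq> Gamma3)))
   \<and> \<comment> \<open>and the three are pairwise inequivalent\<close>
     (\<forall>F. similarity F \<longrightarrow>
        \<not> F ` Gamma1 \<subseteq> Gamma2 \<and> \<not> F ` Gamma1 \<subseteq> Gamma3 \<and>
        \<not> F ` Gamma2 \<subseteq> Gamma1 \<and> \<not> F ` Gamma2 \<subseteq> Gamma3 \<and>
        \<not> F ` Gamma3 \<subseteq> Gamma1 \<and> \<not> F ` Gamma3 \<subseteq> Gamma2)"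
proof (intro conjI allI impI)
  show "spacelike_curve {-pi/2<..<pi/2} gamma1" using gamma1_all by blast
  show "gamma1 ` {-pi/2<..<pi/2} = Gamma1" using gamma1_all by blast
  show "\<forall>s\<in>{-pi/2<..<pi/2}. speed gamma1 s = 1 \<and> curv gamma1 s = 1 / cos s" using gamma1_all by blast
  show "translates_with {-pi/2<..<pi/2} gamma1 (0, 1)" using gamma1_all by blast
  show "spacelike_curve {0<..} gamma2" using gamma2_all by blast
  show "gamma2 ` {0<..} = Gamma2" using gamma2_all by blast
  show "\<forall>s\<in>{0<..}. speed gamma2 s = 1 \<and> curv gamma2 s = 1 / sinh s" using gamma2_all by blast
  show "translates_with {0<..} gamma2 (1, 0)" using gamma2_all by blast
  show "spacelike_curve {0<..} gamma3" using gamma3_all by blast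
  show "gamma3 ` {0<..} = Gamma3" using gamma3_all by blast
  show "\<forall>s\<in>{0<..}. speed gamma3 s = 1 \<and> curv gamma3 s = 1 / s" using gamma3_all by blast
  show "translates_with {0<..} gamma3 (1/2, 1/2)" using gamma3_all by blast
  fix I X assume "translator I X \<and> (\<exists>u\<in>I. curv X u \<noteq> 0)"
  then show "\<exists>F. similarity F \<and> (F ` X ` I \<subseteq> Gamma1 \<or> F ` X ` I \<subseteq> Gamma2 \<or> F ` X ` I \<subseteq> Gamma3)"
    using classify by blast
next
  fix F :: "real \<times> real \<Rightarrow> real \<times> real" assume "similarity F"
  note i = inequiv[OF this]
  show "\<not> F ` Gamma1 \<subseteq> Gamma2" using i by blast
  show "\<not> F ` Gamma1 \<subseteq> Gamma3" using i by blast
  show "\<not> F ` Gamma2 \<subseteq> Gamma1" using i by blast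
  show "\<not> F ` Gamma2 \<subseteq> Gamma3" using i by blast
  show "\<not> F ` Gamma3 \<subseteq> Gamma1" using i by blast
  show "\<not> F ` Gamma3 \<subseteq> Gamma2" using i by blast
qed


end
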